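(* For any finite group $G$ and any prime $p$, \[ \sum_{H}\big(1-\chi(\mathcal S^*_{N_G(H)/H})+\mu(H)\big)=0, \] \[ \sum_{H}\sum_{x\in C_G(H)}\big(1-\chi(\mathcal S^*_{C_{N_G(H)}(x)/H})+\mu(H)\big)=0, \] \[ \sum_{H}\big(|H|-\chi(\mathcal S^*_{N_G(H)/H})\,|H|+\mu(H)\big)=\frac{p-1}{p}\sum_{C}|C|, \] where $H$ runs over the set of nonidentity $p$-subgroups of $G$ and $C$ over the set of nonidentity cyclic $p$-subgroups of $G$.
   Context: For a finite group $X$, $\mathcal S^*_X$ denotes the poset of nonidentity $p$-subgroups of $X$ ordered by inclusion, regarded as a finite category; $\chi(\mathcal S^*_X)$ is its Euler characteristic, which for a finite poset equals $\sum_{a,b}\mu_X(a,b)$ where $\mu_X$ is the Möbius function of that poset (the inverse of its zeta matrix $\zeta(a,b)=1$ if $a\le b$, $0$ otherwise); it is $0$ if the poset is empty. For $x\in C_G(H)$, $C_{N_G(H)}(x)$ contains $H$, so $C_{N_G(H)}(x)/H$ is a group. $\mu(H)=\mu(1,H)$ where $\mu$ is the Möbius function of the poset of all subgroups of $G$ ($\mu(H,H)=1$, $\mu(H,K)=-\sum_{H\le L<K}\mu(H,L)$ for $H<K$). *)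

theory Defs
  imports "HOL-Algebra.Algebra"
begin

definition poset_mobius :: "('a \<Rightarrow> 'a \<Rightarrow> bool) \<Rightarrow> 'a set \<Rightarrow> 'a \<Rightarrow> 'a \<Rightarrow> int" where
  "poset_mobius R P =
     (THE m. (\<forall>a\<in>P. \<forall>b\<in>P.
                 (\<Sum>c\<in>P. m a c * (if R c b then 1 else 0)) = (if a = b then 1 else 0))
           \<and> (\<forall>a b. a \<notin> P \<or> b \<notin> P \<longrightarrow> m a b = 0))"

definition poset_euler_char :: "('a \<Rightarrow> 'a \<Rightarrow> bool) \<Rightarrow> 'a set \<Rightarrow> int" where
  "poset_euler_char R P = (\<Sum>a\<in>P. \<Sum>b\<in>P. poset_mobius R P a b)"

definition p_subgroup :: "nat \<Rightarrow> ('a, 'b) monoid_scheme \<Rightarrow> 'a set \<Rightarrow> bool" where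
  "p_subgroup p G H \<longleftrightarrow> subgroup H G \<and> (\<exists>k. card H = p ^ k)"

definition nonid_p_subgroups :: "nat \<Rightarrow> ('a, 'b) monoid_scheme \<Rightarrow> 'a set set" where
  "nonid_p_subgroups p G = {H. p_subgroup p G H \<and> H \<noteq> {\<one>\<^bsub>G\<^esub>}}"

definition chi_S :: "nat \<Rightarrow> ('a, 'b) monoid_scheme \<Rightarrow> int" where
  "chi_S p G = poset_euler_char (\<subseteq>) (nonid_p_subgroups p G)"

definition nonid_cyclic_p_subgroups :: "nat \<Rightarrow> ('a, 'b) monoid_scheme \<Rightarrow> 'a set set" where
  "nonid_cyclic_p_subgroups p G =
     {C \<in> nonid_p_subgroups p G. \<exists>g\<in>carrier G. C = generate G {g}}"

definition centralizer :: "('a, 'b) monoid_scheme \<Rightarrow> 'a set \<Rightarrow> 'a set" where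
  "centralizer G S = {g \<in> carrier G. \<forall>s\<in>S. g \<otimes>\<^bsub>G\<^esub> s = s \<otimes>\<^bsub>G\<^esub> g}"

definition subgroup_mu :: "('a, 'b) monoid_scheme \<Rightarrow> 'a set \<Rightarrow> int" where
  "subgroup_mu G H = poset_mobius (\<subseteq>) {K. subgroup K G} {\<one>\<^bsub>G\<^esub>} H"

end

theory Submission
  imports Defs
begin

definition linv :: "('a \<Rightarrow> 'a \<Rightarrow> bool) \<Rightarrow> 'a set \<Rightarrow> ('a \<Rightarrow> 'a \<Rightarrow> int) \<Rightarrow> bool" where
  "linv R P m \<longleftrightarrow> (\<forall>a\<in>P. \<forall>b\<in>P.
                 (\<Sum>c\<in>P. m a c * (if R c b then 1 else 0)) = (if a = b then 1 else 0))
           \<and> (\<forall>a b. a \<notin> P \<or> b \<notin> P \<longrightarrow> m a b = 0)"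

definition po :: "('a \<Rightarrow> 'a \<Rightarrow> bool) \<Rightarrow> 'a set \<Rightarrow> bool" where
  "po R P \<longleftrightarrow> (\<forall>a\<in>P. R a a) \<and> (\<forall>a\<in>P. \<forall>b\<in>P. R a b \<and> R b a \<longrightarrow> a = b)
     \<and> (\<forall>a\<in>P. \<forall>b\<in>P. \<forall>c\<in>P. R a b \<and> R b c \<longrightarrow> R a c)"

lemma po_subset: "po R P \<Longrightarrow> Q \<subseteq> P \<Longrightarrow> po R Q"
  unfolding po_def by blast

lemma po_op: "po R P \<Longrightarrow> po (\<lambda>a b. R b a) P"
  unfolding po_def by blast

lemma po_subseteq: "po (\<subseteq>) P"
  unfolding po_def by auto

lemma po_maximal:
  assumes "finite P" "P \<noteq> {}" "po R P"
  shows "\<exists>x\<in>P. \<forall>b\<in>P. R x b \<longrightarrow> b = x"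
proof -
  define f where "f x = card {c\<in>P. R c x}" for x
  have "finite (f ` P)" using assms by simp
  moreover have "f ` P \<noteq> {}" using assms by simp
  ultimately have "Max (f ` P) \<in> f ` P" by (rule Max_in)
  then obtain x where x: "x \<in> P" "f x = Max (f ` P)" by auto
  show ?thesis
  proof (intro bexI[OF _ x(1)] ballI impI)
    fix b assume b: "b \<in> P" "R x b"
    show "b = x"
    proof (rule ccontr)
      assume ne: "b \<noteq> x"
      have "{c\<in>P. R c x} \<subseteq> {c\<in>P. R c b}" using assms(3) b x(1) unfolding po_def by blast
      moreover have "b \<in> {c\<in>P. R c b}" using assms(3) b unfolding po_def by blast
      moreover have "b \<notin> {c\<in>P. R c x}" using assms(3) b x(1) ne unfolding po_def by blast
      ultimately have "{c\<in>P. R c x} \<subset> {c\<in>P. R c b}" by blast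
      hence "f x < f b" unfolding f_def using assms(1) by (intro psubset_card_mono) auto
      moreover have "f b \<le> Max (f ` P)" using assms(1) b(1) by simp
      ultimately show False using x(2) by simp
    qed
  qed
qed

lemma exists_linv:
  assumes "finite P" "po R P"
  shows "\<exists>m. linv R P m"
  using assms
proof (induction P rule: measure_induct_rule[of card])
  case (less P)
  show ?case
  proof (cases "P = {}")
    case True
    then show ?thesis unfolding linv_def by (intro exI[of _ "\<lambda>a b. 0"]) auto
  next
    case False
    obtain x where x: "x \<in> P" "\<forall>b\<in>P. R x b \<longrightarrow> b = x" using po_maximal[OF less.prems(1) False less.prems(2)] by blast
    define P' where "P' = P - {x}"
    have "card P' < card P" unfolding P'_def by (rule card_Diff1_less[OF less.prems(1) x(1)])
    moreover have "finite P'" using less.prems unfolding P'_def by auto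
    moreover have "po R P'" using po_subset[OF less.prems(2)] unfolding P'_def by blast
    ultimately have "\<exists>m. linv R P' m" using less.IH by blast
    then obtain m' where m': "linv R P' m'" by blast
    define m where "m a b = (if a \<in> P \<and> b \<in> P then (if b = x then (if a = x then 1 else - (\<Sum>c\<in>P'. m' a c * (if R c x then 1 else 0))) else (if a = x then 0 else m' a b)) else 0)" for a b
    have PP: "P = insert x P'" "x \<notin> P'" unfolding P'_def using x(1) by auto
    have fin: "finite P'" by fact
    have "linv R P m"
      unfolding linv_def
    proof (intro conjI ballI allI impI)
      fix a b assume "a \<notin> P \<or> b \<notin> P" thus "m a b = 0" unfolding m_def by auto
    next
      fix a b assume a: "a \<in> P" and b: "b \<in> P"
      show "(\<Sum>c\<in>P. m a c * (if R c b then 1 else 0)) = (if a = b then 1 else 0)"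
      proof (cases "b = x")
        case False
        hence bP': "b \<in> P'" using b PP by auto
        have nR: "\<not> R x b" using x(2) b False by auto
        have "(\<Sum>c\<in>P. m a c * (if R c b then 1 else 0)) = (\<Sum>c\<in>P'. m a c * (if R c b then 1 else 0))"
          using PP fin nR by simp
        also have "\<dots> = (if a = b then 1 else 0)"
        proof (cases "a = x")
          case True
          have "(\<Sum>c\<in>P'. m a c * (if R c b then 1 else 0)) = 0"
            using True PP by (intro sum.neutral) (auto simp: m_def)
          then show ?thesis using True bP' PP by auto
        next
          case False
          hence aP': "a \<in> P'" using a PP by auto
          have "(\<Sum>c\<in>P'. m a c * (if R c b then 1 else 0)) = (\<Sum>c\<in>P'. m' a c * (if R c b then 1 else 0))"
            using aP' PP False by (intro sum.cong) (auto simp: m_def)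
          then show ?thesis using m' aP' bP' unfolding linv_def by auto
        qed
        finally show ?thesis .
      next
        case True
        have Rxx: "R x x" using less.prems(2) x(1) unfolding po_def by auto
        show ?thesis
        proof (cases "a = x")
          case True
          have "(\<Sum>c\<in>P'. m a c * (if R c b then 1 else 0)) = 0"
            using True PP by (intro sum.neutral) (auto simp: m_def)
          then show ?thesis using True \<open>b = x\<close> PP fin Rxx by (simp add: m_def)
        next
          case False
          hence aP': "a \<in> P'" using a PP by auto
          have "(\<Sum>c\<in>P'. m a c * (if R c b then 1 else 0)) = (\<Sum>c\<in>P'. m' a c * (if R c x then 1 else 0))"
            using aP' PP False \<open>b = x\<close> by (intro sum.cong) (auto simp: m_def)
          then show ?thesis using True False PP fin Rxx aP' by (simp add: m_def)
        qed
      qed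
    qed
    then show ?thesis by blast
  qed
qed

lemma linv_transpose:
  assumes "finite P" "linv R P m" "linv (\<lambda>a b. R b a) P n" "a \<in> P" "b \<in> P"
  shows "m a b = n b a"
proof -
  have m1: "\<And>a d. a \<in> P \<Longrightarrow> d \<in> P \<Longrightarrow> (\<Sum>c\<in>P. m a c * (if R c d then 1 else 0)) = (if a = d then 1 else 0)"
    using assms(2) unfolding linv_def by blast
  have n1: "\<And>b c. b \<in> P \<Longrightarrow> c \<in> P \<Longrightarrow> (\<Sum>d\<in>P. n b d * (if R c d then 1 else 0)) = (if b = c then 1 else 0)"
    using assms(3) unfolding linv_def by blast
  have "(\<Sum>d\<in>P. (\<Sum>c\<in>P. m a c * (if R c d then 1 else 0)) * n b d) = (\<Sum>d\<in>P. (if a = d then 1 else 0) * n b d)"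
    using m1 assms(4) by (intro sum.cong) auto
  also have "\<dots> = (\<Sum>d\<in>P. (if a = d then n b a else 0))" by (intro sum.cong) auto
  also have "\<dots> = n b a" using assms(1,4) by (simp add: sum.delta)
  finally have 1: "(\<Sum>d\<in>P. (\<Sum>c\<in>P. m a c * (if R c d then 1 else 0)) * n b d) = n b a" .
  have "(\<Sum>d\<in>P. (\<Sum>c\<in>P. m a c * (if R c d then 1 else 0)) * n b d)
      = (\<Sum>c\<in>P. m a c * (\<Sum>d\<in>P. n b d * (if R c d then 1 else 0)))"
  proof -
    have "(\<Sum>d\<in>P. (\<Sum>c\<in>P. m a c * (if R c d then 1 else 0)) * n b d)
       = (\<Sum>d\<in>P. \<Sum>c\<in>P. m a c * (n b d * (if R c d then 1 else 0)))"
      by (intro sum.cong refl) (simp add: sum_distrib_left sum_distrib_right mult_ac)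
    also have "\<dots> = (\<Sum>c\<in>P. \<Sum>d\<in>P. m a c * (n b d * (if R c d then 1 else 0)))"
      by (rule sum.swap)
    also have "\<dots> = (\<Sum>c\<in>P. m a c * (\<Sum>d\<in>P. n b d * (if R c d then 1 else 0)))"
      by (simp add: sum_distrib_left)
    finally show ?thesis .
  qed
  also have "\<dots> = (\<Sum>c\<in>P. m a c * (if b = c then 1 else 0))"
    using n1 assms(5) by (intro sum.cong) auto
  also have "\<dots> = (\<Sum>c\<in>P. (if b = c then m a b else 0))" by (intro sum.cong) auto
  also have "\<dots> = m a b" using assms(1,5) by (simp add: sum.delta)
  finally show ?thesis using 1 by (rule trans[OF sym])
qed

lemma mobius_linv:
  assumes "finite P" "po R P"
  shows "linv R P (poset_mobius R P)"
proof -
  obtain n where n: "linv (\<lambda>a b. R b a) P n" using exists_linv[OF assms(1) po_op[OF assms(2)]] by blast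
  obtain m where m: "linv R P m" using exists_linv[OF assms] by blast
  have uniq: "m' = m" if "linv R P m'" for m'
  proof (intro ext)
    fix a b show "m' a b = m a b"
    proof (cases "a \<in> P \<and> b \<in> P")
      case True
      then show ?thesis using linv_transpose[OF assms(1) that n] linv_transpose[OF assms(1) m n] by auto
    next
      case False
      then show ?thesis using that m unfolding linv_def by auto
    qed
  qed
  have "poset_mobius R P = (THE m. linv R P m)" unfolding poset_mobius_def linv_def by (rule refl)
  also have "\<dots> = m" by (rule the_equality[where P="linv R P", OF m uniq])
  finally show ?thesis using m by (simp only:)
qed

lemma mobius_transpose:
  assumes "finite P" "po R P" "a \<in> P" "b \<in> P"
  shows "poset_mobius R P a b = poset_mobius (\<lambda>a b. R b a) P b a"
  using linv_transpose[OF assms(1) mobius_linv[OF assms(1,2)] mobius_linv[OF assms(1) po_op[OF assms(2)]] assms(3,4)] .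

lemma euler_op:
  assumes "finite P" "po R P"
  shows "poset_euler_char (\<lambda>a b. R b a) P = poset_euler_char R P"
proof -
  have "(\<Sum>a\<in>P. \<Sum>b\<in>P. poset_mobius R P a b) = (\<Sum>a\<in>P. \<Sum>b\<in>P. poset_mobius (\<lambda>a b. R b a) P b a)"
    by (intro sum.cong refl; rule mobius_transpose[OF assms]; assumption)
  also have "\<dots> = (\<Sum>b\<in>P. \<Sum>a\<in>P. poset_mobius (\<lambda>a b. R b a) P b a)" by (rule sum.swap)
  finally show ?thesis by (simp add: poset_euler_char_def)
qed


definition wt :: "('a \<Rightarrow> 'a \<Rightarrow> bool) \<Rightarrow> 'a set \<Rightarrow> ('a \<Rightarrow> int) \<Rightarrow> bool" where
  "wt R P w \<longleftrightarrow> (\<forall>b\<in>P. (\<Sum>c\<in>{c\<in>P. R c b}. w c) = 1)"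

lemma col_wt:
  assumes "finite P" "po R P"
  shows "wt R P (\<lambda>b. \<Sum>a\<in>P. poset_mobius R P a b)"
  unfolding wt_def
proof
  fix b assume b: "b \<in> P"
  have L: "linv R P (poset_mobius R P)" by (rule mobius_linv[OF assms])
  have "(\<Sum>c\<in>{c\<in>P. R c b}. \<Sum>a\<in>P. poset_mobius R P a c) = (\<Sum>c\<in>P. \<Sum>a\<in>P. poset_mobius R P a c * (if R c b then 1 else 0))"
    using assms(1) by (simp add: sum.inter_filter) (intro sum.cong refl; simp)
  also have "\<dots> = (\<Sum>a\<in>P. \<Sum>c\<in>P. poset_mobius R P a c * (if R c b then 1 else 0))" by (rule sum.swap)
  also have "\<dots> = (\<Sum>a\<in>P. (if a = b then 1 else 0))"
    using L b unfolding linv_def by (intro sum.cong refl) blast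
  also have "\<dots> = 1" using assms(1) b by (simp add: sum.delta)
  finally show "(\<Sum>c\<in>{c\<in>P. R c b}. \<Sum>a\<in>P. poset_mobius R P a c) = 1" .
qed

lemma euler_col:
  "poset_euler_char R P = (\<Sum>b\<in>P. \<Sum>a\<in>P. poset_mobius R P a b)"
  unfolding poset_euler_char_def by (rule sum.swap)

lemma exists_wt:
  assumes "finite P" "po R P"
  shows "\<exists>w. wt R P w"
  using col_wt[OF assms] by blast

lemma wt_split:
  assumes "finite P" "po R P" "wt R P w" "b \<in> P"
  shows "w b + (\<Sum>c\<in>{c\<in>P. R c b \<and> c \<noteq> b}. w c) = 1"
proof -
  have "{c\<in>P. R c b} = insert b {c\<in>P. R c b \<and> c \<noteq> b}" using assms(2,4) unfolding po_def by auto
  moreover have "finite {c\<in>P. R c b \<and> c \<noteq> b}" using assms(1) by simp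
  ultimately have "(\<Sum>c\<in>{c\<in>P. R c b}. w c) = w b + (\<Sum>c\<in>{c\<in>P. R c b \<and> c \<noteq> b}. w c)" by simp
  then show ?thesis using assms(3,4) unfolding wt_def by simp
qed

lemma wt_unique:
  assumes "finite P" "po R P" "wt R P w" "wt R P w'"
  shows "b \<in> P \<Longrightarrow> w b = w' b"
proof (induction b rule: measure_induct_rule[of "\<lambda>b. card {c\<in>P. R c b \<and> c \<noteq> b}"])
  case (less b)
  have "\<And>c. c \<in> {c\<in>P. R c b \<and> c \<noteq> b} \<Longrightarrow> w c = w' c"
  proof -
    fix c assume c: "c \<in> {c\<in>P. R c b \<and> c \<noteq> b}"
    have "{d\<in>P. R d c \<and> d \<noteq> c} \<subseteq> {d\<in>P. R d b \<and> d \<noteq> b}"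
      using c less.prems assms(2) unfolding po_def by blast
    moreover have "c \<notin> {d\<in>P. R d c \<and> d \<noteq> c}" by simp
    moreover have "c \<in> {d\<in>P. R d b \<and> d \<noteq> b}" using c by simp
    ultimately have "{d\<in>P. R d c \<and> d \<noteq> c} \<subset> {d\<in>P. R d b \<and> d \<noteq> b}" by blast
    hence "card {d\<in>P. R d c \<and> d \<noteq> c} < card {d\<in>P. R d b \<and> d \<noteq> b}"
      using assms(1) by (intro psubset_card_mono) auto
    then show "w c = w' c" using less.IH c by simp
  qed
  hence "(\<Sum>c\<in>{c\<in>P. R c b \<and> c \<noteq> b}. w c) = (\<Sum>c\<in>{c\<in>P. R c b \<and> c \<noteq> b}. w' c)"
    by (rule sum.cong[OF refl])
  then show ?case using wt_split[OF assms(1,2,3) less.prems] wt_split[OF assms(1,2,4) less.prems] by linarith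
qed

lemma euler_wt:
  assumes "finite P" "po R P" "wt R P w"
  shows "poset_euler_char R P = (\<Sum>b\<in>P. w b)"
proof -
  have "poset_euler_char R P = (\<Sum>b\<in>P. \<Sum>a\<in>P. poset_mobius R P a b)" by (rule euler_col)
  also have "\<dots> = (\<Sum>b\<in>P. w b)"
    using wt_unique[OF assms(1,2) col_wt[OF assms(1,2)] assms(3)] by (intro sum.cong refl) blast
  finally show ?thesis .
qed

lemma euler_wt_op:
  assumes "finite P" "po R P" "wt (\<lambda>a b. R b a) P v"
  shows "poset_euler_char R P = (\<Sum>b\<in>P. v b)"
  using euler_op[OF assms(1,2)] euler_wt[OF assms(1) po_op[OF assms(2)] assms(3)] by simp

lemma wt_restrict:
  assumes "wt R P w" "Q \<subseteq> P" "\<And>b c. b \<in> Q \<Longrightarrow> c \<in> P \<Longrightarrow> R c b \<Longrightarrow> c \<in> Q"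
  shows "wt R Q w"
  unfolding wt_def
proof
  fix b assume b: "b \<in> Q"
  have "{c\<in>Q. R c b} = {c\<in>P. R c b}" using assms(2,3) b by blast
  then show "(\<Sum>c\<in>{c\<in>Q. R c b}. w c) = 1" using assms(1) assms(2) b unfolding wt_def by auto
qed

lemma euler_below:
  assumes "finite P" "po R P" "wt R P w" "x \<in> P"
  shows "poset_euler_char R {c\<in>P. R c x \<and> c \<noteq> x} = 1 - w x"
proof -
  have "wt R {c\<in>P. R c x \<and> c \<noteq> x} w"
  proof (rule wt_restrict[OF assms(3)])
    show "{c\<in>P. R c x \<and> c \<noteq> x} \<subseteq> P" by blast
    fix b c assume b: "b \<in> {c\<in>P. R c x \<and> c \<noteq> x}" and c: "c \<in> P" "R c b"
    have t: "R c x" using assms(2) b c assms(4) unfolding po_def by blast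
    have "c \<noteq> x"
    proof
      assume "c = x"
      then have "R x b" using c by simp
      then show False using assms(2) b assms(4) unfolding po_def by blast
    qed
    then show "c \<in> {c\<in>P. R c x \<and> c \<noteq> x}" using t c by blast
  qed
  then have "poset_euler_char R {c\<in>P. R c x \<and> c \<noteq> x} = (\<Sum>c\<in>{c\<in>P. R c x \<and> c \<noteq> x}. w c)"
    using assms by (intro euler_wt) (auto intro: po_subset)
  then show ?thesis using wt_split[OF assms] by linarith
qed

lemma euler_cone:
  assumes "finite P" "po R P" "m \<in> P" "\<And>c. c \<in> P \<Longrightarrow> R c m"
  shows "poset_euler_char R P = 1"
proof -
  obtain w where w: "wt R P w" using exists_wt[OF assms(1,2)] by blast
  have "{c\<in>P. R c m} = P" using assms(4) by blast
  then have "(\<Sum>c\<in>P. w c) = 1" using w assms(3) unfolding wt_def by metis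
  then show ?thesis using euler_wt[OF assms(1,2) w] by simp
qed

lemma euler_iso:
  assumes "finite P" "po R P" "finite P'" "po R' P'" "bij_betw f P P'"
    "\<And>a b. a \<in> P \<Longrightarrow> b \<in> P \<Longrightarrow> R a b \<longleftrightarrow> R' (f a) (f b)"
  shows "poset_euler_char R P = poset_euler_char R' P'"
proof -
  obtain w where w: "wt R' P' w" using exists_wt[OF assms(3,4)] by blast
  have "wt R P (w \<circ> f)"
    unfolding wt_def
  proof
    fix b assume b: "b \<in> P"
    have fb: "f b \<in> P'" using assms(5) b by (auto simp: bij_betw_def)
    have inj: "inj_on f {c\<in>P. R c b}" using assms(5) by (auto simp: bij_betw_def inj_on_def)
    have img: "f ` {c\<in>P. R c b} = {c\<in>P'. R' c (f b)}"
    proof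
      show "f ` {c\<in>P. R c b} \<subseteq> {c\<in>P'. R' c (f b)}" using assms(5,6) b by (auto simp: bij_betw_def)
      show "{c\<in>P'. R' c (f b)} \<subseteq> f ` {c\<in>P. R c b}"
      proof
        fix c assume c: "c \<in> {c\<in>P'. R' c (f b)}"
        then obtain a where a: "a \<in> P" "c = f a" using assms(5) by (auto simp: bij_betw_def)
        then show "c \<in> f ` {c\<in>P. R c b}" using assms(6)[OF a(1) b] c by auto
      qed
    qed
    have "(\<Sum>c\<in>{c\<in>P. R c b}. (w \<circ> f) c) = (\<Sum>c\<in>f ` {c\<in>P. R c b}. w c)"
      using sum.reindex[OF inj, of w] by simp
    also have "\<dots> = 1" using img w fb unfolding wt_def by simp
    finally show "(\<Sum>c\<in>{c\<in>P. R c b}. (w \<circ> f) c) = 1" .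
  qed
  then have "poset_euler_char R P = (\<Sum>c\<in>P. w (f c))" using euler_wt[OF assms(1,2)] by simp
  also have "\<dots> = (\<Sum>c\<in>P'. w c)" using sum.reindex[of f P w] assms(5) by (simp add: bij_betw_def)
  also have "\<dots> = poset_euler_char R' P'" using euler_wt[OF assms(3,4) w] by simp
  finally show ?thesis .
qed


lemma euler_retract:
  assumes "finite P" "po R P" "\<forall>x\<in>P. f x \<in> P" "\<forall>x\<in>P. R (f x) x"
    "\<forall>x\<in>P. \<forall>y\<in>P. R x y \<longrightarrow> R (f x) (f y)" "\<forall>x\<in>P. f (f x) = f x"
  shows "poset_euler_char R P = poset_euler_char R (f ` P)"
  using assms
proof (induction P rule: measure_induct_rule[of card])
  case (less P)
  note A = less.prems
  define Q where "Q = f ` P"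
  have finQ: "finite Q" using A(1) unfolding Q_def by simp
  have QP: "Q \<subseteq> P" using A(3) unfolding Q_def by blast
  have poQ: "po R Q" using po_subset[OF A(2) QP] .
  have fixQ: "\<And>q. q \<in> Q \<Longrightarrow> f q = q" using A(6) unfolding Q_def by blast
  obtain w where w: "wt R P w" using exists_wt[OF A(1,2)] by blast
  obtain wQ where wQ: "wt R Q wQ" using exists_wt[OF finQ poQ] by blast
  have key: "w x = (if f x = x then wQ x else 0)" if x: "x \<in> P" for x
  proof -
    define D where "D = {c\<in>P. R c x \<and> c \<noteq> x}"
    have DP: "D \<subseteq> P" unfolding D_def by blast
    have "x \<notin> D" unfolding D_def by blast
    hence "D \<subset> P" using DP x by blast
    hence cardD: "card D < card P" using A(1) by (rule psubset_card_mono[rotated])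
    have finD: "finite D" using A(1) DP finite_subset by blast
    have poD: "po R D" using po_subset[OF A(2) DP] .
    have fD: "\<forall>y\<in>D. f y \<in> D"
    proof
      fix y assume y: "y \<in> D"
      have yP: "y \<in> P" "R y x" "y \<noteq> x" using y unfolding D_def by auto
      have fyP: "f y \<in> P" using A(3) yP(1) by blast
      have r1: "R (f y) y" using A(4) yP(1) by blast
      have r2: "R (f y) x" using A(2) fyP yP x r1 unfolding po_def by blast
      have "f y \<noteq> x"
      proof
        assume "f y = x"
        then have "R x y" using r1 by simp
        then show False using A(2) yP x unfolding po_def by blast
      qed
      then show "f y \<in> D" using fyP r2 unfolding D_def by blast
    qed
    have IH: "poset_euler_char R D = poset_euler_char R (f ` D)"
    proof (rule less.IH[OF cardD finD poD fD])
      show "\<forall>x\<in>D. R (f x) x" using A(4) DP by blast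
      show "\<forall>x\<in>D. \<forall>y\<in>D. R x y \<longrightarrow> R (f x) (f y)" using A(5) DP by blast
      show "\<forall>x\<in>D. f (f x) = f x" using A(6) DP by blast
    qed
    have chiD: "poset_euler_char R D = 1 - w x"
      using euler_below[OF A(1,2) w x] unfolding D_def .
    show ?thesis
    proof (cases "f x = x")
      case False
      have fxD: "f x \<in> D" using A(3,4) x False unfolding D_def by blast
      have "poset_euler_char R (f ` D) = 1"
      proof (rule euler_cone)
        show "finite (f ` D)" using finD by simp
        show "po R (f ` D)" using po_subset[OF poD] fD by blast
        show "f x \<in> f ` D" using fxD A(6) x by (metis image_eqI)
        fix c assume "c \<in> f ` D"
        then obtain y where y: "y \<in> D" "c = f y" by blast
        have "R y x" using y unfolding D_def by blast
        then show "R c (f x)" using A(5) y DP x by blast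
      qed
      then show ?thesis using IH chiD False by simp
    next
      case True
      have xQ: "x \<in> Q" using True x unfolding Q_def by (metis image_eqI)
      have img: "f ` D = {c\<in>Q. R c x \<and> c \<noteq> x}"
      proof
        show "f ` D \<subseteq> {c\<in>Q. R c x \<and> c \<noteq> x}"
          using fD DP unfolding Q_def D_def by blast
        show "{c\<in>Q. R c x \<and> c \<noteq> x} \<subseteq> f ` D"
        proof
          fix c assume c: "c \<in> {c\<in>Q. R c x \<and> c \<noteq> x}"
          then have "c \<in> D" "f c = c" using QP fixQ unfolding D_def by auto
          then show "c \<in> f ` D" by (metis image_eqI)
        qed
      qed
      have "poset_euler_char R (f ` D) = 1 - wQ x"
        using euler_below[OF finQ poQ wQ xQ] img by simp
      then show ?thesis using IH chiD True by simp
    qed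
  qed
  have "poset_euler_char R P = (\<Sum>x\<in>P. w x)" by (rule euler_wt[OF A(1,2) w])
  also have "\<dots> = (\<Sum>x\<in>P. if f x = x then wQ x else 0)" using key by (rule sum.cong[OF refl])
  also have "\<dots> = (\<Sum>x\<in>{x\<in>P. f x = x}. wQ x)" using A(1) by (simp add: sum.inter_filter)
  also have "{x\<in>P. f x = x} = Q"
  proof
    show "{x\<in>P. f x = x} \<subseteq> Q" unfolding Q_def by (force)
    show "Q \<subseteq> {x\<in>P. f x = x}" using QP fixQ by blast
  qed
  also have "(\<Sum>x\<in>Q. wQ x) = poset_euler_char R Q" by (rule euler_wt[OF finQ poQ wQ, symmetric])
  finally show ?case unfolding Q_def .
qed


lemma (in group) action_from_fun:
  assumes cl: "\<And>g x. g \<in> carrier G \<Longrightarrow> x \<in> E \<Longrightarrow> act g x \<in> E"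
    and one: "\<And>x. x \<in> E \<Longrightarrow> act \<one> x = x"
    and comp: "\<And>g h x. g \<in> carrier G \<Longrightarrow> h \<in> carrier G \<Longrightarrow> x \<in> E \<Longrightarrow> act (g \<otimes> h) x = act g (act h x)"
  shows "group_action G E (\<lambda>g. restrict (act g) E)"
proof -
  have bij: "restrict (act g) E \<in> Bij E" if g: "g \<in> carrier G" for g
  proof -
    have inv: "act (inv g) (act g x) = x" if "x \<in> E" for x
      using comp[of "inv g" g x] one[of x] g that by simp
    have inv2: "act g (act (inv g) x) = x" if "x \<in> E" for x
      using comp[of g "inv g" x] one[of x] g that by simp
    have "inj_on (act g) E"
      by (rule inj_on_inverseI[where g="act (inv g)"]) (rule inv)
    moreover have "act g ` E = E"
    proof
      show "act g ` E \<subseteq> E" using cl g by blast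
      show "E \<subseteq> act g ` E"
      proof
        fix x assume x: "x \<in> E"
        then have "x = act g (act (inv g) x)" using inv2 by simp
        moreover have "act (inv g) x \<in> E" using cl g x by simp
        ultimately show "x \<in> act g ` E" by blast
      qed
    qed
    ultimately have "bij_betw (act g) E E" by (simp add: bij_betw_def)
    then have "bij_betw (restrict (act g) E) E E" by (simp add: bij_betw_restrict_eq)
    then show ?thesis unfolding Bij_def by simp
  qed
  have hom: "(\<lambda>g. restrict (act g) E) \<in> hom G (BijGroup E)"
    unfolding hom_def
  proof (intro CollectI conjI ballI)
    show "(\<lambda>g. restrict (act g) E) \<in> carrier G \<rightarrow> carrier (BijGroup E)"
      using bij by (auto simp: BijGroup_def)
    fix x y assume x: "x \<in> carrier G" and y: "y \<in> carrier G"
    have "restrict (act x) E \<otimes>\<^bsub>BijGroup E\<^esub> restrict (act y) E = compose E (restrict (act x) E) (restrict (act y) E)"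
      using bij x y by (simp add: BijGroup_def)
    also have "\<dots> = restrict (act (x \<otimes> y)) E"
      using comp x y cl by (auto simp: compose_def fun_eq_iff)
    finally show "restrict (act (x \<otimes> y)) E = restrict (act x) E \<otimes>\<^bsub>BijGroup E\<^esub> restrict (act y) E" by simp
  qed
  show ?thesis
    unfolding group_action_def group_hom_def group_hom_axioms_def
    using hom group_BijGroup is_group by blast
qed

lemma (in group_action) fixed_points_mod:
  assumes fin: "finite (carrier G)" "finite E" and p: "Factorial_Ring.prime p" and ord: "card (carrier G) = p ^ a"
  shows "card E mod p = card {x\<in>E. \<forall>g\<in>carrier G. \<phi> g x = x} mod p"
proof -
  define F where "F = {x\<in>E. \<forall>g\<in>carrier G. \<phi> g x = x}"
  define Orbs where "Orbs = orbits G E \<phi>"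
  have finO: "finite Orbs" unfolding Orbs_def orbits_def using fin(2) by simp
  have grp: "group G" using group_hom group_hom.axioms(1) by blast
  have orbit_sub: "orbit G \<phi> x \<subseteq> E" if "x \<in> E" for x
    unfolding orbit_def using element_image that by blast
  have "card E = (\<Sum>x\<in>E. 1::nat)" by simp
  also have "\<dots> = (\<Sum>orb\<in>Orbs. \<Sum>x\<in>orb. 1)" unfolding Orbs_def using disjoint_sum[OF fin(2), of "\<lambda>_. 1::nat"] by simp
  also have "\<dots> = (\<Sum>orb\<in>Orbs. card orb)" by simp
  finally have cE: "card E = (\<Sum>orb\<in>Orbs. card orb)" .
  have pp: "card orb mod p = (if card orb = 1 then 1 else 0)" if orbin: "orb \<in> Orbs" for orb
  proof -
    obtain x where x: "x \<in> E" "orb = orbit G \<phi> x" using orbin unfolding Orbs_def orbits_def by blast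
    have "card orb * card (stabilizer G \<phi> x) = p ^ a" using orbit_stabilizer_theorem[OF x(1)] x ord by (simp add: order_def)
    then have "card orb dvd p ^ a" by (metis dvd_triv_left)
    then obtain i where i: "card orb = p ^ i" using divides_primepow_nat[OF p] by blast
    have p1: "p > 1" using p prime_gt_1_nat by blast
    show ?thesis
    proof (cases i)
      case 0 then show ?thesis using i p1 by simp
    next
      case (Suc j) then show ?thesis using i p1 by simp
    qed
  qed
  have "card E mod p = (\<Sum>orb\<in>Orbs. card orb mod p) mod p" using cE by (simp add: mod_sum_eq)
  also have "(\<Sum>orb\<in>Orbs. card orb mod p) = (\<Sum>orb\<in>Orbs. if card orb = 1 then 1 else 0)"
    using pp by (rule sum.cong[OF refl])
  also have "\<dots> = card {orb\<in>Orbs. card orb = 1}" using card_as_sums[OF refl finO, of "\<lambda>orb. card orb = 1"] by simp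
  also have "card {orb\<in>Orbs. card orb = 1} = card F"
  proof -
    have "bij_betw (\<lambda>x. {x}) F {orb\<in>Orbs. card orb = 1}"
    proof (rule bij_betwI[where g="\<lambda>s. the_elem s"])
      show "(\<lambda>x. {x}) \<in> F \<rightarrow> {orb\<in>Orbs. card orb = 1}"
      proof
        fix x assume x: "x \<in> F"
        have "orbit G \<phi> x = {x}"
        proof
          show "orbit G \<phi> x \<subseteq> {x}" using x unfolding F_def orbit_def by auto
          show "{x} \<subseteq> orbit G \<phi> x" using orbit_refl x unfolding F_def by auto
        qed
        then show "{x} \<in> {orb\<in>Orbs. card orb = 1}" using x unfolding Orbs_def orbits_def F_def by auto
      qed
      show "the_elem \<in> {orb\<in>Orbs. card orb = 1} \<rightarrow> F"
      proof
        fix orb assume orb: "orb \<in> {orb\<in>Orbs. card orb = 1}"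
        obtain x where x: "x \<in> E" "orb = orbit G \<phi> x" using orb unfolding Orbs_def orbits_def by blast
        have "x \<in> orb" using orbit_refl x by simp
        have "card orb = 1" using orb by simp
        then obtain y where "orb = {y}" by (rule card_1_singletonE)
        then have ox: "orb = {x}" using \<open>x \<in> orb\<close> by simp
        have "\<phi> g x = x" if "g \<in> carrier G" for g
        proof -
          have "\<phi> g x \<in> orb" using that x unfolding orbit_def by blast
          then show ?thesis using ox by simp
        qed
        then show "the_elem orb \<in> F" using ox x unfolding F_def by simp
      qed
      show "\<And>x. x \<in> F \<Longrightarrow> the_elem {x} = x" by simp
      show "{the_elem y} = y" if y: "y \<in> {orb\<in>Orbs. card orb = 1}" for y
      proof -
        have "card y = 1" using y by simp
        then obtain z where "y = {z}" by (rule card_1_singletonE)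
        then show ?thesis by simp
      qed
    qed
    then show ?thesis by (simp add: bij_betw_same_card)
  qed
  finally show ?thesis unfolding F_def .
qed


lemma r_coset_upd [simp]: "H #>\<^bsub>M\<lparr>carrier := S\<rparr>\<^esub> a = H #>\<^bsub>M\<^esub> a"
  by (auto simp: r_coset_def)
lemma l_coset_upd [simp]: "a <#\<^bsub>M\<lparr>carrier := S\<rparr>\<^esub> H = a <#\<^bsub>M\<^esub> H"
  by (auto simp: l_coset_def)
lemma set_mult_upd [simp]: "A <#>\<^bsub>M\<lparr>carrier := S\<rparr>\<^esub> B = A <#>\<^bsub>M\<^esub> B"
  by (auto simp: set_mult_def)

lemma (in group) sub_card_dvd:
  assumes "subgroup H G" "subgroup K G" "H \<subseteq> K"
  shows "card H dvd card K"
proof -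
  interpret K: group "G\<lparr>carrier := K\<rparr>" using subgroup_imp_group[OF assms(2)] .
  have "subgroup H (G\<lparr>carrier := K\<rparr>)" using subgroup_incl[OF assms] .
  from K.lagrange[OF this] show ?thesis by (simp add: order_def) (metis dvd_triv_right)
qed

lemma (in group) sub_pgroup:
  assumes "Factorial_Ring.prime p" "subgroup H G" "subgroup K G" "H \<subseteq> K" "card K = p ^ k"
  shows "\<exists>j\<le>k. card H = p ^ j"
  using sub_card_dvd[OF assms(2,3,4)] assms(5) divides_primepow_nat[OF assms(1)] by simp

lemma (in group) conj_image:
  assumes "H \<subseteq> carrier G" "g \<in> carrier G"
  shows "g <# H #> inv g = (\<lambda>h. g \<otimes> h \<otimes> inv g) ` H"
  unfolding l_coset_def r_coset_def by auto

lemma (in group) normalizer_iff: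
  assumes "subgroup H G" "finite H"
  shows "normalizer G H = {g\<in>carrier G. \<forall>h\<in>H. g \<otimes> h \<otimes> inv g \<in> H}"
proof -
  have Hs: "H \<subseteq> carrier G" using assms(1) subgroup.subset by blast
  have "normalizer G H = {g\<in>carrier G. g <# H #> inv g = H}"
    unfolding normalizer_def stabilizer_def using Hs by auto
  also have "\<dots> = {g\<in>carrier G. \<forall>h\<in>H. g \<otimes> h \<otimes> inv g \<in> H}"
  proof (intro Collect_cong conj_cong refl)
    fix g assume g: "g \<in> carrier G"
    have inj: "inj_on (\<lambda>h. g \<otimes> h \<otimes> inv g) H"
      by (rule inj_onI, rule conjugation_is_inj[OF g]) (use Hs in auto)
    have c: "card ((\<lambda>h. g \<otimes> h \<otimes> inv g) ` H) = card H" using card_image[OF inj] .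
    show "(g <# H #> inv g = H) = (\<forall>h\<in>H. g \<otimes> h \<otimes> inv g \<in> H)"
    proof
      assume "g <# H #> inv g = H"
      then show "\<forall>h\<in>H. g \<otimes> h \<otimes> inv g \<in> H" using conj_image[OF Hs g] by auto
    next
      assume a: "\<forall>h\<in>H. g \<otimes> h \<otimes> inv g \<in> H"
      have "(\<lambda>h. g \<otimes> h \<otimes> inv g) ` H \<subseteq> H" using a by auto
      then have "(\<lambda>h. g \<otimes> h \<otimes> inv g) ` H = H" using c assms(2) by (intro card_subset_eq) auto
      then show "g <# H #> inv g = H" using conj_image[OF Hs g] by simp
    qed
  qed
  finally show ?thesis .
qed

lemma (in group) normalizer_grows:
  assumes fin: "finite (carrier G)" and p: "Factorial_Ring.prime p"
    and H: "subgroup H G" and K: "subgroup K G" and HK: "H \<subset> K" and cK: "card K = p ^ k"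
  shows "\<exists>x\<in>K. x \<notin> H \<and> x \<in> normalizer G H"
proof -
  have Hs: "H \<subseteq> carrier G" using H subgroup.subset by blast
  have Ks: "K \<subseteq> carrier G" using K subgroup.subset by blast
  have finH: "finite H" using fin Hs finite_subset by blast
  have finK: "finite K" using fin Ks finite_subset by blast
  obtain a where a: "card H = p ^ a" "a \<le> k" using sub_pgroup[OF p H K _ cK] HK by blast
  interpret HG: group "G\<lparr>carrier := H\<rparr>" using subgroup_imp_group[OF H] .
  define E where "E = (\<lambda>k. H #> k) ` K"
  define act where "act h x = x #> inv h" for h x
  have actE: "act h x \<in> E" if hx: "h \<in> H" "x \<in> E" for h x
  proof -
    obtain y where y: "y \<in> K" "x = H #> y" using hx(2) unfolding E_def by blast
    have "h \<in> K" using hx(1) HK by blast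
    then have hK: "inv h \<in> K" by (rule subgroup.m_inv_closed[OF K])
    have "act h x = H #> (y \<otimes> inv h)" unfolding act_def y(2)
      by (rule coset_mult_assoc[OF Hs]) (use y(1) hK Ks in auto)
    moreover have "y \<otimes> inv h \<in> K" by (rule subgroup.m_closed[OF K y(1) hK])
    ultimately show ?thesis unfolding E_def by blast
  qed
  have GA: "group_action (G\<lparr>carrier := H\<rparr>) E (\<lambda>h. restrict (act h) E)"
  proof (rule HG.action_from_fun)
    show "\<And>g x. g \<in> carrier (G\<lparr>carrier := H\<rparr>) \<Longrightarrow> x \<in> E \<Longrightarrow> act g x \<in> E" using actE by simp
    show "\<And>x. x \<in> E \<Longrightarrow> act \<one>\<^bsub>G\<lparr>carrier := H\<rparr>\<^esub> x = x"
    proof -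
      fix x assume "x \<in> E"
      then obtain y where y: "y \<in> K" "x = H #> y" unfolding E_def by blast
      show "act \<one>\<^bsub>G\<lparr>carrier := H\<rparr>\<^esub> x = x" unfolding act_def y(2)
        using coset_mult_assoc[OF Hs, of y \<one>] y(1) Ks by auto
    qed
    show "\<And>g h x. g \<in> carrier (G\<lparr>carrier := H\<rparr>) \<Longrightarrow> h \<in> carrier (G\<lparr>carrier := H\<rparr>) \<Longrightarrow> x \<in> E \<Longrightarrow>
        act (g \<otimes>\<^bsub>G\<lparr>carrier := H\<rparr>\<^esub> h) x = act g (act h x)"
    proof -
      fix g h x assume g: "g \<in> carrier (G\<lparr>carrier := H\<rparr>)" and h: "h \<in> carrier (G\<lparr>carrier := H\<rparr>)" and x: "x \<in> E"
      then obtain y where y: "y \<in> K" "x = H #> y" unfolding E_def by blast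
      have gh: "g \<in> carrier G" "h \<in> carrier G" using g h Hs by auto
      have "act (g \<otimes>\<^bsub>G\<lparr>carrier := H\<rparr>\<^esub> h) x = H #> y #> (inv h \<otimes> inv g)"
        unfolding act_def y(2) using gh by (simp add: inv_mult_group)
      also have "\<dots> = H #> y #> inv h #> inv g"
      proof -
        have yG: "y \<in> carrier G" using y(1) Ks by blast
        have "H #> y \<subseteq> carrier G" by (rule r_coset_subset_G[OF Hs yG])
        then show ?thesis using coset_mult_assoc[of "H #> y" "inv h" "inv g"] gh by simp
      qed
      finally show "act (g \<otimes>\<^bsub>G\<lparr>carrier := H\<rparr>\<^esub> h) x = act g (act h x)" unfolding act_def y(2) .
    qed
  qed
  interpret GA: group_action "G\<lparr>carrier := H\<rparr>" E "\<lambda>h. restrict (act h) E" using GA .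
  define F where "F = {x\<in>E. \<forall>g\<in>carrier (G\<lparr>carrier := H\<rparr>). restrict (act g) E x = x}"
  have finE: "finite E" unfolding E_def using finK by simp
  have cardE: "card E * card H = card K"
  proof -
    interpret KG: group "G\<lparr>carrier := K\<rparr>" using subgroup_imp_group[OF K] .
    have "subgroup H (G\<lparr>carrier := K\<rparr>)" using subgroup_incl[OF H K] HK by blast
    from KG.lagrange[OF this] have "card (rcosets\<^bsub>G\<lparr>carrier := K\<rparr>\<^esub> H) * card H = card K" by (simp add: order_def)
    moreover have "rcosets\<^bsub>G\<lparr>carrier := K\<rparr>\<^esub> H = E" unfolding RCOSETS_def E_def by auto
    ultimately show ?thesis by simp
  qed
  have "card H < card K" using HK finK by (simp add: psubset_card_mono)
  then have "p ^ a < p ^ k" using a cK by simp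
  then have "a < k" using power_less_imp_less_exp[OF prime_gt_1_nat[OF p]] by blast
  have pk: "p ^ k = p ^ (k - a) * p ^ a" using a(2) by (simp add: power_add[symmetric])
  have p0: "p > 0" using p prime_gt_0_nat by simp
  have "card E * p ^ a = p ^ (k - a) * p ^ a" using cardE a(1) cK pk by simp
  then have "card E = p ^ (k - a)" using p0 by simp
  then have "p dvd card E" using \<open>a < k\<close> by simp
  moreover have "card E mod p = card F mod p"
  proof -
    have "finite (carrier (G\<lparr>carrier := H\<rparr>))" using finH by simp
    moreover have "card (carrier (G\<lparr>carrier := H\<rparr>)) = p ^ a" using a(1) by simp
    ultimately show ?thesis unfolding F_def by (rule GA.fixed_points_mod[OF _ finE p])
  qed
  ultimately have "card F mod p = 0" by (simp add: dvd_eq_mod_eq_0)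
  then have pF: "p dvd card F" by (simp add: dvd_eq_mod_eq_0)
  have HF: "H \<in> F"
  proof -
    have "H #> \<one> = H" using Hs by (simp add: coset_mult_one)
    moreover have "\<one> \<in> K" by (rule subgroup.one_closed[OF K])
    then have "H #> \<one> \<in> E" unfolding E_def by (rule imageI)
    ultimately have HE: "H \<in> E" by simp
    have "act g H = H" if gH: "g \<in> H" for g
    proof -
      have "inv g \<in> H" by (rule subgroup.m_inv_closed[OF H gH])
      then show ?thesis unfolding act_def by (rule subgroup.rcos_const[OF H is_group])
    qed
    then show ?thesis unfolding F_def using HE by simp
  qed
  have finF: "finite F" unfolding F_def using finE by simp
  have cF0: "card F > 0" using HF finF card_gt_0_iff by blast
  have "card F \<ge> p" by (rule dvd_imp_le[OF pF cF0])
  moreover have "p \<ge> 2" by (rule prime_ge_2_nat[OF p])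
  ultimately have cF2: "card F \<ge> 2" by linarith
  have "\<not> F \<subseteq> {H}"
  proof
    assume "F \<subseteq> {H}"
    then have "card F \<le> card {H}" by (rule card_mono[rotated]) simp
    then show False using cF2 by simp
  qed
  then obtain y where y: "y \<in> F" "y \<noteq> H" by blast
  then have yE: "y \<in> E" unfolding F_def by blast
  then obtain x where x: "x \<in> K" "y = H #> x" unfolding E_def by blast
  have xG: "x \<in> carrier G" using x Ks by blast
  have xH: "x \<notin> H"
  proof
    assume "x \<in> H"
    then have "H #> x = H" by (rule subgroup.rcos_const[OF H is_group])
    then show False using y(2) x(2) by simp
  qed
  have "x \<otimes> h \<otimes> inv x \<in> H" if h: "h \<in> H" for h
  proof -
    have hG: "h \<in> carrier G" using h Hs by blast
    have ih: "inv h \<in> H" by (rule subgroup.m_inv_closed[OF H h])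
    have all: "\<forall>g\<in>carrier (G\<lparr>carrier := H\<rparr>). restrict (act g) E y = y" using y(1) unfolding F_def by blast
    have "inv h \<in> carrier (G\<lparr>carrier := H\<rparr>)" using ih by simp
    with all have "restrict (act (inv h)) E y = y" by (rule bspec)
    then have "act (inv h) y = y" using yE by simp
    then have "H #> x #> h = H #> x" unfolding act_def x(2) using hG by simp
    moreover have "H #> x #> h = H #> (x \<otimes> h)" by (rule coset_mult_assoc[OF Hs xG hG])
    ultimately have eq: "H #> x = H #> (x \<otimes> h)" by simp
    have "x \<otimes> h \<in> carrier G" using xG hG by simp
    then have "x \<otimes> h \<in> H #> x" by (rule repr_independenceD[OF H _ eq])
    then show ?thesis by (rule subgroup.rcos_module_imp[OF H is_group xG])
  qed
  then have "x \<in> normalizer G H" using normalizer_iff[OF H finH] xG by blast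
  then show ?thesis using x xH by blast
qed


lemma (in group) H_sub_normalizer:
  assumes "subgroup H G" "finite H"
  shows "H \<subseteq> normalizer G H"
proof
  fix x assume x: "x \<in> H"
  have xG: "x \<in> carrier G" using x subgroup.subset[OF assms(1)] by blast
  have "\<forall>h\<in>H. x \<otimes> h \<otimes> inv x \<in> H"
  proof
    fix h assume h: "h \<in> H"
    have "x \<otimes> h \<in> H" by (rule subgroup.m_closed[OF assms(1) x h])
    moreover have "inv x \<in> H" by (rule subgroup.m_inv_closed[OF assms(1) x])
    ultimately show "x \<otimes> h \<otimes> inv x \<in> H" by (rule subgroup.m_closed[OF assms(1)])
  qed
  then show "x \<in> normalizer G H" using normalizer_iff[OF assms] xG by blast
qed

lemma (in group) corr_hom:
  assumes H: "subgroup H G"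
  shows "group_hom (G\<lparr>carrier := normalizer G H\<rparr>) (G\<lparr>carrier := normalizer G H\<rparr> Mod H) (\<lambda>a. H #> a)"
proof -
  have Hs: "H \<subseteq> carrier G" using subgroup.subset[OF H] .
  have N: "subgroup (normalizer G H) G" by (rule normalizer_imp_subgroup[OF Hs])
  have nor: "normal H (G\<lparr>carrier := normalizer G H\<rparr>)" by (rule subgroup_in_normalizer[OF H])
  have g1: "group (G\<lparr>carrier := normalizer G H\<rparr>)" by (rule subgroup_imp_group[OF N])
  have g2: "group (G\<lparr>carrier := normalizer G H\<rparr> Mod H)" by (rule normal.factorgroup_is_group[OF nor])
  have "(\<lambda>a. H #>\<^bsub>G\<lparr>carrier := normalizer G H\<rparr>\<^esub> a) \<in> hom (G\<lparr>carrier := normalizer G H\<rparr>) (G\<lparr>carrier := normalizer G H\<rparr> Mod H)"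
    by (rule normal.r_coset_hom_Mod[OF nor])
  then have "(\<lambda>a. H #> a) \<in> hom (G\<lparr>carrier := normalizer G H\<rparr>) (G\<lparr>carrier := normalizer G H\<rparr> Mod H)" by simp
  then show ?thesis using g1 g2 unfolding group_hom_def group_hom_axioms_def by blast
qed

lemma (in group) corr_fwd:
  assumes H: "subgroup H G" and K: "subgroup K G" and HK: "H \<subseteq> K" and KN: "K \<subseteq> normalizer G H"
  shows "subgroup ((\<lambda>k. H #> k) ` K) (G\<lparr>carrier := normalizer G H\<rparr> Mod H)"
    and "card ((\<lambda>k. H #> k) ` K) * card H = card K"
    and "\<Union>((\<lambda>k. H #> k) ` K) = K"
proof -
  have Hs: "H \<subseteq> carrier G" using subgroup.subset[OF H] .
  have Ks: "K \<subseteq> carrier G" using subgroup.subset[OF K] .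
  have N: "subgroup (normalizer G H) G" by (rule normalizer_imp_subgroup[OF Hs])
  interpret hom: group_hom "G\<lparr>carrier := normalizer G H\<rparr>" "G\<lparr>carrier := normalizer G H\<rparr> Mod H" "\<lambda>a. H #> a"
    by (rule corr_hom[OF H])
  have "subgroup K (G\<lparr>carrier := normalizer G H\<rparr>)" by (rule subgroup_incl[OF K N KN])
  then show "subgroup ((\<lambda>k. H #> k) ` K) (G\<lparr>carrier := normalizer G H\<rparr> Mod H)"
    by (rule hom.subgroup_img_is_subgroup)
  interpret KG: group "G\<lparr>carrier := K\<rparr>" by (rule subgroup_imp_group[OF K])
  have "subgroup H (G\<lparr>carrier := K\<rparr>)" by (rule subgroup_incl[OF H K HK])
  from KG.lagrange[OF this] have "card (rcosets\<^bsub>G\<lparr>carrier := K\<rparr>\<^esub> H) * card H = card K" by (simp add: order_def)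
  moreover have "rcosets\<^bsub>G\<lparr>carrier := K\<rparr>\<^esub> H = (\<lambda>k. H #> k) ` K" unfolding RCOSETS_def by auto
  ultimately show "card ((\<lambda>k. H #> k) ` K) * card H = card K" by simp
  show "\<Union>((\<lambda>k. H #> k) ` K) = K"
  proof
    show "\<Union>((\<lambda>k. H #> k) ` K) \<subseteq> K"
    proof
      fix x assume "x \<in> \<Union>((\<lambda>k. H #> k) ` K)"
      then obtain k h where kh: "k \<in> K" "h \<in> H" "x = h \<otimes> k" unfolding r_coset_def by blast
      have "h \<in> K" using kh(2) HK by blast
      then show "x \<in> K" using kh subgroup.m_closed[OF K] by simp
    qed
    show "K \<subseteq> \<Union>((\<lambda>k. H #> k) ` K)"
    proof
      fix k assume k: "k \<in> K"
      have "k \<in> H #> k" using rcos_self[OF _ H] k Ks by blast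
      then show "k \<in> \<Union>((\<lambda>k. H #> k) ` K)" using k by blast
    qed
  qed
qed

lemma (in group) corr_bwd:
  assumes H: "subgroup H G" and finH: "finite H" and KK: "subgroup KK (G\<lparr>carrier := normalizer G H\<rparr> Mod H)"
  shows "subgroup {g \<in> normalizer G H. H #> g \<in> KK} G"
    and "H \<subseteq> {g \<in> normalizer G H. H #> g \<in> KK}"
    and "{g \<in> normalizer G H. H #> g \<in> KK} \<subseteq> normalizer G H"
    and "(\<lambda>k. H #> k) ` {g \<in> normalizer G H. H #> g \<in> KK} = KK"
proof -
  have Hs: "H \<subseteq> carrier G" using subgroup.subset[OF H] .
  have N: "subgroup (normalizer G H) G" by (rule normalizer_imp_subgroup[OF Hs])
  have Ns: "normalizer G H \<subseteq> carrier G" using subgroup.subset[OF N] .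
  interpret hom: group_hom "G\<lparr>carrier := normalizer G H\<rparr>" "G\<lparr>carrier := normalizer G H\<rparr> Mod H" "\<lambda>a. H #> a"
    by (rule corr_hom[OF H])
  define K where "K = {g \<in> normalizer G H. H #> g \<in> KK}"
  have HK: "H \<subseteq> K"
  proof
    fix h assume h: "h \<in> H"
    have "h \<in> normalizer G H" using H_sub_normalizer[OF H finH] h by blast
    moreover have "H #> h = H" by (rule subgroup.rcos_const[OF H is_group h])
    moreover have "H \<in> KK"
    proof -
      have "\<one>\<^bsub>G\<lparr>carrier := normalizer G H\<rparr> Mod H\<^esub> \<in> KK" by (rule subgroup.one_closed[OF KK])
      then show ?thesis by simp
    qed
    ultimately show "h \<in> K" unfolding K_def by simp
  qed
  show "subgroup K G"
  proof (rule subgroupI)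
    show "K \<subseteq> carrier G" unfolding K_def using Ns by blast
    show "K \<noteq> {}" using HK subgroup.one_closed[OF H] by blast
    fix a assume a: "a \<in> K"
    have aN: "a \<in> normalizer G H" using a unfolding K_def by blast
    have aNc: "a \<in> carrier (G\<lparr>carrier := normalizer G H\<rparr>)" using aN by simp
    have "inv\<^bsub>G\<lparr>carrier := normalizer G H\<rparr>\<^esub> a = inv a" using aN N by (simp add: m_inv_consistent)
    moreover have "inv\<^bsub>G\<lparr>carrier := normalizer G H\<rparr>\<^esub> a \<in> normalizer G H"
      using hom.G.inv_closed[OF aNc] by simp
    moreover have "H #> inv\<^bsub>G\<lparr>carrier := normalizer G H\<rparr>\<^esub> a = inv\<^bsub>G\<lparr>carrier := normalizer G H\<rparr> Mod H\<^esub> (H #> a)"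
      by (rule hom.hom_inv[OF aNc])
    moreover have "inv\<^bsub>G\<lparr>carrier := normalizer G H\<rparr> Mod H\<^esub> (H #> a) \<in> KK"
      using a subgroup.m_inv_closed[OF KK] unfolding K_def by blast
    ultimately show "inv a \<in> K" unfolding K_def by simp
    fix b assume b: "b \<in> K"
    have bN: "b \<in> normalizer G H" using b unfolding K_def by blast
    have bNc: "b \<in> carrier (G\<lparr>carrier := normalizer G H\<rparr>)" using bN by simp
    have "H #> (a \<otimes>\<^bsub>G\<lparr>carrier := normalizer G H\<rparr>\<^esub> b) = (H #> a) \<otimes>\<^bsub>G\<lparr>carrier := normalizer G H\<rparr> Mod H\<^esub> (H #> b)"
      by (rule hom.hom_mult[OF aNc bNc])
    moreover have "(H #> a) \<otimes>\<^bsub>G\<lparr>carrier := normalizer G H\<rparr> Mod H\<^esub> (H #> b) \<in> KK"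
      using a b subgroup.m_closed[OF KK] unfolding K_def by blast
    moreover have "a \<otimes> b \<in> normalizer G H" using aN bN subgroup.m_closed[OF N] by blast
    ultimately show "a \<otimes> b \<in> K" unfolding K_def by simp
  qed
  show "H \<subseteq> {g \<in> normalizer G H. H #> g \<in> KK}" using HK unfolding K_def .
  show "{g \<in> normalizer G H. H #> g \<in> KK} \<subseteq> normalizer G H" by blast
  show "(\<lambda>k. H #> k) ` {g \<in> normalizer G H. H #> g \<in> KK} = KK"
  proof
    show "(\<lambda>k. H #> k) ` {g \<in> normalizer G H. H #> g \<in> KK} \<subseteq> KK" by blast
    show "KK \<subseteq> (\<lambda>k. H #> k) ` {g \<in> normalizer G H. H #> g \<in> KK}"
    proof
      fix Y assume Y: "Y \<in> KK"
      then have "Y \<in> carrier (G\<lparr>carrier := normalizer G H\<rparr> Mod H)" using subgroup.subset[OF KK] by blast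
      then obtain g where g: "g \<in> normalizer G H" "Y = H #> g" unfolding FactGroup_def RCOSETS_def by auto
      then show "Y \<in> (\<lambda>k. H #> k) ` {g \<in> normalizer G H. H #> g \<in> KK}" using Y by blast
    qed
  qed
qed


lemma (in group) pgroup_card_quot:
  assumes p: "Factorial_Ring.prime p" and "c * card H = p ^ j" and "card H = p ^ a"
  shows "\<exists>i. c = p ^ i"
proof -
  have "c dvd p ^ j" using assms(2) by (metis dvd_triv_left)
  then show ?thesis using divides_primepow_nat[OF p] by blast
qed

lemma (in group) rcosets_of_self:
  assumes H: "subgroup H G"
  shows "(\<lambda>k. H #> k) ` H = {H}"
proof -
  have "H #> k = H" if "k \<in> H" for k by (rule subgroup.rcos_const[OF H is_group that])
  moreover have "H \<noteq> {}" using subgroup.one_closed[OF H] by blast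
  ultimately show ?thesis by auto
qed

lemma (in group) chi_quot_T:
  assumes fin: "finite (carrier G)" and p: "Factorial_Ring.prime p" and HS: "H \<in> nonid_p_subgroups p G"
  shows "chi_S p (G\<lparr>carrier := normalizer G H\<rparr> Mod H)
       = poset_euler_char (\<subseteq>) {K \<in> nonid_p_subgroups p G. H \<subset> K \<and> K \<subseteq> normalizer G H}"
proof -
  define S where "S = nonid_p_subgroups p G"
  define N where "N = normalizer G H"
  define Q where "Q = G\<lparr>carrier := N\<rparr> Mod H"
  define T where "T = {K \<in> S. H \<subset> K \<and> K \<subseteq> N}"
  define SQ where "SQ = nonid_p_subgroups p Q"
  define \<phi> where "\<phi> K = (\<lambda>k. H #> k) ` K" for K
  have H: "subgroup H G" and H1: "H \<noteq> {\<one>}" and cH: "\<exists>a. card H = p ^ a"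
    using HS unfolding nonid_p_subgroups_def p_subgroup_def by auto
  obtain a where a: "card H = p ^ a" using cH by blast
  have Hs: "H \<subseteq> carrier G" using subgroup.subset[OF H] .
  have finH: "finite H" using fin Hs finite_subset by blast
  have Nsub: "subgroup N G" unfolding N_def by (rule normalizer_imp_subgroup[OF Hs])
  have Ns: "N \<subseteq> carrier G" using subgroup.subset[OF Nsub] .
  have finS: "finite S"
  proof -
    have "S \<subseteq> Pow (carrier G)" unfolding S_def nonid_p_subgroups_def p_subgroup_def using subgroup.subset by blast
    then show ?thesis using fin finite_subset by blast
  qed
  have finT: "finite T" unfolding T_def using finS by simp
  have finSQ: "finite SQ"
  proof -
    have "carrier Q = (\<lambda>x. H #> x) ` N" unfolding Q_def by (simp add: carrier_FactGroup)
    then have "finite (carrier Q)" using fin Ns finite_subset by (metis finite_imageI)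
    moreover have "SQ \<subseteq> Pow (carrier Q)" unfolding SQ_def nonid_p_subgroups_def p_subgroup_def using subgroup.subset by blast
    ultimately show ?thesis using finite_subset by blast
  qed
  have Kfacts: "subgroup K G" "H \<subseteq> K" "K \<subseteq> N" if "K \<in> T" for K
    using that unfolding T_def S_def nonid_p_subgroups_def p_subgroup_def by auto
  have union: "\<Union>(\<phi> K) = K" if "K \<in> T" for K
    unfolding \<phi>_def N_def by (rule corr_fwd(3)[OF H Kfacts[OF that, unfolded N_def]])
  have bij: "bij_betw \<phi> T SQ"
    unfolding bij_betw_def
  proof (intro conjI)
    show "inj_on \<phi> T"
    proof (rule inj_onI)
      fix K K' assume "K \<in> T" "K' \<in> T" "\<phi> K = \<phi> K'"
      then show "K = K'" using union by metis
    qed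
    show "\<phi> ` T = SQ"
    proof
      show "\<phi> ` T \<subseteq> SQ"
      proof
        fix Y assume "Y \<in> \<phi> ` T"
        then obtain K where K: "K \<in> T" "Y = \<phi> K" by blast
        note kf = Kfacts[OF K(1), unfolded N_def]
        have sub: "subgroup Y Q" unfolding K(2) \<phi>_def Q_def N_def by (rule corr_fwd(1)[OF H kf])
        have cc: "card Y * card H = card K" unfolding K(2) \<phi>_def by (rule corr_fwd(2)[OF H kf])
        obtain j where "card K = p ^ j" using K(1) unfolding T_def S_def nonid_p_subgroups_def p_subgroup_def by auto
        then obtain i where "card Y = p ^ i" using pgroup_card_quot[OF p _ a] cc by metis
        moreover have "Y \<noteq> {H}"
        proof
          assume "Y = {H}"
          then have "K = H" using union[OF K(1)] K(2) by auto
          then show False using K(1) unfolding T_def by blast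
        qed
        ultimately show "Y \<in> SQ" using sub unfolding SQ_def nonid_p_subgroups_def p_subgroup_def Q_def by auto
      qed
      show "SQ \<subseteq> \<phi> ` T"
      proof
        fix Y assume Y: "Y \<in> SQ"
        have subY: "subgroup Y (G\<lparr>carrier := normalizer G H\<rparr> Mod H)"
          using Y unfolding SQ_def Q_def N_def nonid_p_subgroups_def p_subgroup_def by auto
        obtain i where ci: "card Y = p ^ i" using Y unfolding SQ_def nonid_p_subgroups_def p_subgroup_def by auto
        have YH: "Y \<noteq> {H}" using Y unfolding SQ_def Q_def nonid_p_subgroups_def p_subgroup_def by auto
        define K where "K = {g \<in> normalizer G H. H #> g \<in> Y}"
        have K1: "subgroup K G" unfolding K_def by (rule corr_bwd(1)[OF H finH subY])
        have K2: "H \<subseteq> K" unfolding K_def by (rule corr_bwd(2)[OF H finH subY])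
        have K3: "K \<subseteq> normalizer G H" unfolding K_def by (rule corr_bwd(3)[OF H finH subY])
        have K4: "\<phi> K = Y" unfolding K_def \<phi>_def by (rule corr_bwd(4)[OF H finH subY])
        have "card (\<phi> K) * card H = card K" unfolding \<phi>_def by (rule corr_fwd(2)[OF H K1 K2 K3])
        then have cK: "card K = p ^ (i + a)" using K4 ci a by (simp add: power_add)
        have KH: "K \<noteq> H"
        proof
          assume "K = H"
          then have "\<phi> K = {H}" unfolding \<phi>_def by (simp add: rcosets_of_self[OF H])
          then show False using K4 YH by simp
        qed
        have "K \<noteq> {\<one>}" using K2 KH H1 subgroup.one_closed[OF H] by blast
        then have "K \<in> T" unfolding T_def S_def nonid_p_subgroups_def p_subgroup_def N_def
          using K1 K2 K3 KH cK by blast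
        then show "Y \<in> \<phi> ` T" using K4 by blast
      qed
    qed
  qed
  have ord: "K \<subseteq> K' \<longleftrightarrow> \<phi> K \<subseteq> \<phi> K'" if "K \<in> T" "K' \<in> T" for K K'
  proof
    assume "K \<subseteq> K'" then show "\<phi> K \<subseteq> \<phi> K'" unfolding \<phi>_def by blast
  next
    assume "\<phi> K \<subseteq> \<phi> K'"
    then have "\<Union>(\<phi> K) \<subseteq> \<Union>(\<phi> K')" by blast
    then show "K \<subseteq> K'" using union[OF that(1)] union[OF that(2)] by simp
  qed
  have "poset_euler_char (\<subseteq>) T = poset_euler_char (\<subseteq>) SQ"
    by (rule euler_iso[OF finT po_subseteq finSQ po_subseteq bij ord])
  then show ?thesis unfolding chi_S_def SQ_def Q_def N_def T_def S_def by simp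
qed


lemma (in group) chi_quot:
  assumes fin: "finite (carrier G)" and p: "Factorial_Ring.prime p" and HS: "H \<in> nonid_p_subgroups p G"
  shows "chi_S p (G\<lparr>carrier := normalizer G H\<rparr> Mod H)
       = poset_euler_char (\<subseteq>) {K \<in> nonid_p_subgroups p G. H \<subset> K}"
proof -
  define S where "S = nonid_p_subgroups p G"
  define N where "N = normalizer G H"
  define P where "P = {K \<in> S. H \<subset> K}"
  define T where "T = {K \<in> S. H \<subset> K \<and> K \<subseteq> N}"
  define f where "f K = K \<inter> N" for K
  have H: "subgroup H G" using HS unfolding nonid_p_subgroups_def p_subgroup_def by auto
  have Hs: "H \<subseteq> carrier G" using subgroup.subset[OF H] .
  have finH: "finite H" using fin Hs finite_subset by blast
  have HN: "H \<subseteq> N" unfolding N_def by (rule H_sub_normalizer[OF H finH])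
  have Nsub: "subgroup N G" unfolding N_def by (rule normalizer_imp_subgroup[OF Hs])
  have finS: "finite S"
  proof -
    have "S \<subseteq> Pow (carrier G)" unfolding S_def nonid_p_subgroups_def p_subgroup_def using subgroup.subset by blast
    then show ?thesis using fin finite_subset by blast
  qed
  have finP: "finite P" unfolding P_def using finS by simp
  have fP: "f K \<in> T" if K: "K \<in> P" for K
  proof -
    have K1: "subgroup K G" and K2: "H \<subset> K" and K3: "\<exists>j. card K = p ^ j"
      using K unfolding P_def S_def nonid_p_subgroups_def p_subgroup_def by auto
    obtain j where j: "card K = p ^ j" using K3 by blast
    have sub: "subgroup (K \<inter> N) G" by (rule subgroups_Inter_pair[OF K1 Nsub])
    obtain i where "card (K \<inter> N) = p ^ i" using sub_pgroup[OF p sub K1 _ j] by blast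
    moreover obtain x where x: "x \<in> K" "x \<notin> H" "x \<in> N" using normalizer_grows[OF fin p H K1 K2 j] unfolding N_def by blast
    then have "H \<subset> K \<inter> N" using K2 HN by blast
    moreover have "K \<inter> N \<noteq> {\<one>}"
    proof
      assume e: "K \<inter> N = {\<one>}"
      have o: "\<one> \<in> H" by (rule subgroup.one_closed[OF H])
      have "H \<subseteq> {\<one>}" using \<open>H \<subset> K \<inter> N\<close> e by blast
      then have "H = {\<one>}" using o by blast
      then show False using \<open>H \<subset> K \<inter> N\<close> e by simp
    qed
    ultimately show ?thesis unfolding T_def S_def f_def nonid_p_subgroups_def p_subgroup_def using sub by blast
  qed
  have TP: "T \<subseteq> P" unfolding T_def P_def by blast
  have "poset_euler_char (\<subseteq>) P = poset_euler_char (\<subseteq>) (f ` P)"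
  proof (rule euler_retract[OF finP po_subseteq])
    show "\<forall>x\<in>P. f x \<in> P" using fP TP by blast
    show "\<forall>x\<in>P. f x \<subseteq> x" unfolding f_def by blast
    show "\<forall>x\<in>P. \<forall>y\<in>P. x \<subseteq> y \<longrightarrow> f x \<subseteq> f y" unfolding f_def by blast
    show "\<forall>x\<in>P. f (f x) = f x" unfolding f_def by blast
  qed
  moreover have "f ` P = T"
  proof
    show "f ` P \<subseteq> T" using fP by blast
    show "T \<subseteq> f ` P"
    proof
      fix K assume K: "K \<in> T"
      then have "f K = K" unfolding T_def f_def by blast
      then show "K \<in> f ` P" using K TP by (metis imageI subsetD)
    qed
  qed
  ultimately have "poset_euler_char (\<subseteq>) P = poset_euler_char (\<subseteq>) T" by simp
  then show ?thesis using chi_quot_T[OF fin p HS] unfolding P_def T_def S_def N_def by simp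
qed


lemma coprime_count_prime_power:
  assumes p: "Factorial_Ring.prime (p::nat)" and m: "m > 0"
  shows "card {k\<in>{1..p^m}. coprime k (p^m)} = p^m - p^(m-1)"
proof -
  have p0: "p > 0" using p prime_gt_0_nat by blast
  have cop: "coprime k (p^m) \<longleftrightarrow> \<not> p dvd k" for k
  proof -
    have "coprime k (p^m) \<longleftrightarrow> coprime k p" using m by (simp add: coprime_power_right_iff)
    also have "\<dots> \<longleftrightarrow> \<not> p dvd k"
    proof
      assume c: "coprime k p"
      show "\<not> p dvd k"
      proof
        assume "p dvd k"
        then have "is_unit p" using coprime_common_divisor[OF c, of p] by simp
        then show False using p not_prime_unit by blast
      qed
    next
      assume "\<not> p dvd k"
      then have "coprime p k" using p by (rule prime_imp_coprime[rotated])
      then show "coprime k p" by (rule coprime_commute[THEN iffD1])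
    qed
    finally show ?thesis .
  qed
  have pm: "p^m = p * p^(m-1)" using m by (cases m) simp_all
  have "{k\<in>{1..p^m}. coprime k (p^m)} = {1..p^m} - {k\<in>{1..p^m}. p dvd k}"
  proof (rule Set.set_eqI)
    fix k show "k \<in> {k\<in>{1..p^m}. coprime k (p^m)} \<longleftrightarrow> k \<in> {1..p^m} - {k\<in>{1..p^m}. p dvd k}"
      using cop[of k] by blast
  qed
  moreover have "{k\<in>{1..p^m}. p dvd k} = (\<lambda>j. p * j) ` {1..p^(m-1)}"
  proof
    show "{k\<in>{1..p^m}. p dvd k} \<subseteq> (\<lambda>j. p * j) ` {1..p^(m-1)}"
    proof
      fix k assume k: "k \<in> {k\<in>{1..p^m}. p dvd k}"
      then obtain j where j: "k = p * j" by blast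
      have k1: "k \<ge> 1" "k \<le> p^m" using k by auto
      have "j \<noteq> 0" using k1(1) j by (metis mult_0_right not_one_le_zero)
      then have "j \<ge> 1" by simp
      moreover have "p * j \<le> p * p^(m-1)" using k1(2) j pm by simp
      then have "j \<le> p^(m-1)" using p0 by simp
      ultimately show "k \<in> (\<lambda>j. p * j) ` {1..p^(m-1)}" using j by auto
    qed
    show "(\<lambda>j. p * j) ` {1..p^(m-1)} \<subseteq> {k\<in>{1..p^m}. p dvd k}"
    proof
      fix k assume "k \<in> (\<lambda>j. p * j) ` {1..p^(m-1)}"
      then obtain j where j: "j \<in> {1..p^(m-1)}" "k = p * j" by blast
      have "p * j \<le> p * p^(m-1)" using j(1) by simp
      then have "k \<le> p^m" using j(2) pm by simp
      moreover have "k \<ge> 1" using j p0 by simp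
      ultimately show "k \<in> {k\<in>{1..p^m}. p dvd k}" using j(2) by simp
    qed
  qed
  moreover have "card ((\<lambda>j. p * j) ` {1..p^(m-1)}) = p^(m-1)"
    using p0 by (subst card_image) (auto simp: inj_on_def)
  moreover have "(\<lambda>j. p * j) ` {1..p^(m-1)} \<subseteq> {1..p^m}" using calculation(2) by blast
  ultimately show ?thesis by (simp add: card_Diff_subset)
qed

lemma (in group) pow_mod_ord:
  assumes g: "g \<in> carrier G"
  shows "g [^] (k::nat) = g [^] (k mod ord g)"
proof -
  have "k = ord g * (k div ord g) + k mod ord g" by simp
  then have "g [^] k = (g [^] ord g) [^] (k div ord g) \<otimes> g [^] (k mod ord g)"
    using g by (metis nat_pow_mult nat_pow_pow)
  then show ?thesis using g by simp
qed

lemma (in group) gen_count: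
  assumes fin: "finite (carrier G)" and g0: "g0 \<in> carrier G"
  shows "card {g \<in> carrier G. generate G {g} = generate G {g0}} = card {k\<in>{1..ord g0}. coprime k (ord g0)}"
proof -
  define n where "n = ord g0"
  define C where "C = generate G {g0}"
  have n1: "n \<ge> 1" unfolding n_def by (rule ord_ge_1[OF fin g0])
  have Csub: "subgroup C G" unfolding C_def by (rule generate_is_subgroup) (use g0 in simp)
  have Cs: "C \<subseteq> carrier G" using subgroup.subset[OF Csub] .
  have finC: "finite C" using fin Cs finite_subset by blast
  have cardC: "card C = n" unfolding C_def n_def by (rule generate_pow_card[OF g0, symmetric])
  have Cimg: "C = (\<lambda>k. g0 [^] k) ` {1..n}"
  proof
    show "C \<subseteq> (\<lambda>k. g0 [^] k) ` {1..n}"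
    proof
      fix x assume "x \<in> C"
      then obtain k :: nat where k: "x = g0 [^] k" unfolding C_def generate_pow_on_finite_carrier[OF fin g0] by blast
      have x: "x = g0 [^] (k mod n)" using k pow_mod_ord[OF g0] unfolding n_def by simp
      show "x \<in> (\<lambda>k. g0 [^] k) ` {1..n}"
      proof (cases "k mod n = 0")
        case True
        then have "x = g0 [^] n" using x g0 unfolding n_def by simp
        then show ?thesis using n1 by auto
      next
        case False
        then have "k mod n \<in> {1..n}" using n1 by (simp add: less_imp_le)
        then show ?thesis using x by blast
      qed
    qed
    show "(\<lambda>k. g0 [^] k) ` {1..n} \<subseteq> C"
      unfolding C_def generate_pow_on_finite_carrier[OF fin g0] by blast
  qed
  have iff: "generate G {g} = C \<longleftrightarrow> g \<in> C \<and> ord g = n" if g: "g \<in> carrier G" for g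
  proof
    assume e: "generate G {g} = C"
    have "g \<in> generate G {g}" by (rule generate.incl) simp
    then show "g \<in> C \<and> ord g = n" using e generate_pow_card[OF g] cardC by simp
  next
    assume a: "g \<in> C \<and> ord g = n"
    have "generate G {g} \<subseteq> C" by (rule generate_subgroup_incl) (use a Csub in auto)
    moreover have "card (generate G {g}) = card C" using generate_pow_card[OF g] a cardC by simp
    ultimately show "generate G {g} = C" using finC by (simp add: card_subset_eq)
  qed
  have "{g \<in> carrier G. generate G {g} = C} = (\<lambda>k. g0 [^] k) ` {k\<in>{1..n}. coprime k n}"
  proof
    show "{g \<in> carrier G. generate G {g} = C} \<subseteq> (\<lambda>k. g0 [^] k) ` {k\<in>{1..n}. coprime k n}"
    proof
      fix g assume g: "g \<in> {g \<in> carrier G. generate G {g} = C}"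
      then have gC: "g \<in> C" and og: "ord g = n" using iff by auto
      obtain k where k: "k \<in> {1..n}" "g = g0 [^] k" using gC Cimg by blast
      have "coprime k n" using og k pow_ord_eq_ord_iff[OF fin g0] unfolding n_def by simp
      then show "g \<in> (\<lambda>k. g0 [^] k) ` {k\<in>{1..n}. coprime k n}" using k by blast
    qed
    show "(\<lambda>k. g0 [^] k) ` {k\<in>{1..n}. coprime k n} \<subseteq> {g \<in> carrier G. generate G {g} = C}"
    proof
      fix g assume "g \<in> (\<lambda>k. g0 [^] k) ` {k\<in>{1..n}. coprime k n}"
      then obtain k where k: "k \<in> {1..n}" "coprime k n" "g = g0 [^] k" by blast
      have gC: "g \<in> C" using k Cimg by blast
      have gG: "g \<in> carrier G" using k g0 by simp
      have "ord g = n" using k pow_ord_eq_ord_iff[OF fin g0] unfolding n_def by simp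
      then show "g \<in> {g \<in> carrier G. generate G {g} = C}" using iff[OF gG] gC gG by blast
    qed
  qed
  moreover have "inj_on (\<lambda>k. g0 [^] k) {k\<in>{1..n}. coprime k n}"
    using ord_inj'[OF g0] unfolding n_def by (rule inj_on_subset) blast
  ultimately show ?thesis unfolding C_def n_def by (simp add: card_image)
qed


lemma (in group) finite_S:
  assumes "finite (carrier G)"
  shows "finite (nonid_p_subgroups p G)"
proof -
  have "nonid_p_subgroups p G \<subseteq> Pow (carrier G)"
    unfolding nonid_p_subgroups_def p_subgroup_def using subgroup.subset by blast
  then show ?thesis using assms finite_subset by blast
qed

lemma (in group) mu_wt:
  assumes fin: "finite (carrier G)" and p: "Factorial_Ring.prime p"
  shows "wt (\<subseteq>) (nonid_p_subgroups p G) (\<lambda>H. - subgroup_mu G H)"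
  unfolding wt_def
proof
  define Sub where "Sub = {K. subgroup K G}"
  define S where "S = nonid_p_subgroups p G"
  define M where "M = poset_mobius (\<subseteq>) Sub"
  have finSub: "finite Sub"
  proof -
    have "Sub \<subseteq> Pow (carrier G)" unfolding Sub_def using subgroup.subset by blast
    then show ?thesis using fin finite_subset by blast
  qed
  have L: "linv (\<subseteq>) Sub M" unfolding M_def by (rule mobius_linv[OF finSub po_subseteq])
  have one: "{\<one>} \<in> Sub" unfolding Sub_def using triv_subgroup by simp
  have eq: "(\<Sum>c\<in>{c\<in>Sub. c \<subseteq> b}. M {\<one>} c) = (if {\<one>} = b then 1 else 0)" if b: "b \<in> Sub" for b
  proof -
    have "(\<Sum>c\<in>Sub. M {\<one>} c * (if c \<subseteq> b then 1 else 0)) = (if {\<one>} = b then 1 else 0)"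
      using L one b unfolding linv_def by blast
    moreover have "(\<Sum>c\<in>Sub. M {\<one>} c * (if c \<subseteq> b then 1 else 0)) = (\<Sum>c\<in>{c\<in>Sub. c \<subseteq> b}. M {\<one>} c)"
      using finSub by (simp add: sum.inter_filter) (intro sum.cong refl; simp)
    ultimately show ?thesis by simp
  qed
  have sub1: "{c\<in>Sub. c \<subseteq> {\<one>}} = {{\<one>}}"
  proof
    show "{c\<in>Sub. c \<subseteq> {\<one>}} \<subseteq> {{\<one>}}"
    proof
      fix c assume c: "c \<in> {c\<in>Sub. c \<subseteq> {\<one>}}"
      then have "\<one> \<in> c" unfolding Sub_def using subgroup.one_closed by blast
      then show "c \<in> {{\<one>}}" using c by blast
    qed
    show "{{\<one>}} \<subseteq> {c\<in>Sub. c \<subseteq> {\<one>}}" using one by blast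
  qed
  have M11: "M {\<one>} {\<one>} = 1" using eq[OF one] sub1 by simp
  fix b assume bS: "b \<in> nonid_p_subgroups p G"
  have b: "subgroup b G" "b \<noteq> {\<one>}" "\<exists>k. card b = p ^ k"
    using bS unfolding nonid_p_subgroups_def p_subgroup_def by auto
  obtain k where k: "card b = p ^ k" using b(3) by blast
  have bSub: "b \<in> Sub" unfolding Sub_def using b(1) by simp
  have split: "{c\<in>Sub. c \<subseteq> b} = insert {\<one>} {c\<in>S. c \<subseteq> b}"
  proof
    show "{c\<in>Sub. c \<subseteq> b} \<subseteq> insert {\<one>} {c\<in>S. c \<subseteq> b}"
    proof
      fix c assume c: "c \<in> {c\<in>Sub. c \<subseteq> b}"
      have cs: "subgroup c G" "c \<subseteq> b" using c unfolding Sub_def by auto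
      obtain j where "card c = p ^ j" using sub_pgroup[OF p cs(1) b(1) cs(2) k] by blast
      then show "c \<in> insert {\<one>} {c\<in>S. c \<subseteq> b}"
        unfolding S_def nonid_p_subgroups_def p_subgroup_def using cs by blast
    qed
    show "insert {\<one>} {c\<in>S. c \<subseteq> b} \<subseteq> {c\<in>Sub. c \<subseteq> b}"
    proof -
      have "{\<one>} \<subseteq> b" using subgroup.one_closed[OF b(1)] by blast
      moreover have "{c\<in>S. c \<subseteq> b} \<subseteq> {c\<in>Sub. c \<subseteq> b}"
        unfolding S_def Sub_def nonid_p_subgroups_def p_subgroup_def by blast
      ultimately show ?thesis using one by blast
    qed
  qed
  have notin: "{\<one>} \<notin> {c\<in>S. c \<subseteq> b}" unfolding S_def nonid_p_subgroups_def by blast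
  have finS': "finite {c\<in>S. c \<subseteq> b}" unfolding S_def using finite_S[OF fin] by simp
  have "(\<Sum>c\<in>{c\<in>Sub. c \<subseteq> b}. M {\<one>} c) = 0" using eq[OF bSub] b(2) by auto
  then have "M {\<one>} {\<one>} + (\<Sum>c\<in>{c\<in>S. c \<subseteq> b}. M {\<one>} c) = 0"
    unfolding split using notin finS' by simp
  then have "(\<Sum>c\<in>{c\<in>S. c \<subseteq> b}. M {\<one>} c) = -1" using M11 by simp
  then show "(\<Sum>c\<in>{c \<in> nonid_p_subgroups p G. c \<subseteq> b}. - subgroup_mu G c) = 1"
    unfolding subgroup_mu_def M_def Sub_def S_def by (simp add: sum_negf)
qed

lemma (in group) chi_S_mu:
  assumes fin: "finite (carrier G)" and p: "Factorial_Ring.prime p"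
  shows "poset_euler_char (\<subseteq>) (nonid_p_subgroups p G) = - (\<Sum>H\<in>nonid_p_subgroups p G. subgroup_mu G H)"
  using euler_wt[OF finite_S[OF fin] po_subseteq mu_wt[OF fin p]] by (simp add: sum_negf)

lemma (in group) upwt_exists:
  assumes fin: "finite (carrier G)"
  obtains v where "wt (\<lambda>a b. b \<subseteq> a) (nonid_p_subgroups p G) v"
  using exists_wt[OF finite_S[OF fin] po_op[OF po_subseteq]] by blast

lemma (in group) upwt_val:
  assumes fin: "finite (carrier G)" and v: "wt (\<lambda>a b. b \<subseteq> a) (nonid_p_subgroups p G) v"
    and H: "H \<in> nonid_p_subgroups p G"
  shows "v H = 1 - poset_euler_char (\<subseteq>) {K \<in> nonid_p_subgroups p G. H \<subset> K}"
proof -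
  define S where "S = nonid_p_subgroups p G"
  have finS: "finite S" unfolding S_def by (rule finite_S[OF fin])
  have po1: "po (\<lambda>a b. b \<subseteq> a) S" by (rule po_op[OF po_subseteq])
  have "poset_euler_char (\<lambda>a b. b \<subseteq> a) {c\<in>S. H \<subseteq> c \<and> c \<noteq> H} = 1 - v H"
    using euler_below[OF finS po1 v[folded S_def] H[folded S_def]] by simp
  moreover have "{c\<in>S. H \<subseteq> c \<and> c \<noteq> H} = {K\<in>S. H \<subset> K}" by blast
  moreover have "poset_euler_char (\<lambda>a b. b \<subseteq> a) {K\<in>S. H \<subset> K} = poset_euler_char (\<subseteq>) {K\<in>S. H \<subset> K}"
  proof -
    have "finite {K\<in>S. H \<subset> K}" using finS by simp
    then show ?thesis by (rule euler_op[OF _ po_subseteq])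
  qed
  ultimately show ?thesis unfolding S_def by simp
qed

lemma (in group) identity1:
  assumes fin: "finite (carrier G)" and p: "Factorial_Ring.prime p"
  shows "(\<Sum>H\<in>nonid_p_subgroups p G.
            1 - chi_S p (G\<lparr>carrier := normalizer G H\<rparr> Mod H) + subgroup_mu G H) = 0"
proof -
  define S where "S = nonid_p_subgroups p G"
  obtain v where v: "wt (\<lambda>a b. b \<subseteq> a) S v" using upwt_exists[OF fin] unfolding S_def by blast
  have finS: "finite S" unfolding S_def by (rule finite_S[OF fin])
  have "(\<Sum>H\<in>S. 1 - chi_S p (G\<lparr>carrier := normalizer G H\<rparr> Mod H) + subgroup_mu G H)
      = (\<Sum>H\<in>S. v H + subgroup_mu G H)"
  proof (rule sum.cong[OF refl])
    fix H assume H: "H \<in> S"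
    show "1 - chi_S p (G\<lparr>carrier := normalizer G H\<rparr> Mod H) + subgroup_mu G H = v H + subgroup_mu G H"
      using chi_quot[OF fin p H[unfolded S_def]] upwt_val[OF fin v[unfolded S_def] H[unfolded S_def]] by simp
  qed
  also have "\<dots> = (\<Sum>H\<in>S. v H) + (\<Sum>H\<in>S. subgroup_mu G H)" by (simp add: sum.distrib)
  also have "(\<Sum>H\<in>S. v H) = poset_euler_char (\<subseteq>) S"
    using euler_wt_op[OF finS po_subseteq] v by simp
  also have "\<dots> = - (\<Sum>H\<in>S. subgroup_mu G H)" unfolding S_def by (rule chi_S_mu[OF fin p])
  finally show ?thesis unfolding S_def by simp
qed


lemma (in group) gen_in_S_iff:
  assumes fin: "finite (carrier G)" and p: "Factorial_Ring.prime p" and g: "g \<in> carrier G" "g \<noteq> \<one>"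
    and H: "H \<in> nonid_p_subgroups p G"
  shows "g \<in> H \<longleftrightarrow> generate G {g} \<subseteq> H"
proof
  have Hs: "subgroup H G" using H unfolding nonid_p_subgroups_def p_subgroup_def by auto
  show "g \<in> H \<Longrightarrow> generate G {g} \<subseteq> H" by (rule generate_subgroup_incl) (use Hs in auto)
  show "generate G {g} \<subseteq> H \<Longrightarrow> g \<in> H" using generate.incl[of g "{g}" G] by blast
qed

lemma (in group) count_term:
  assumes fin: "finite (carrier G)" and p: "Factorial_Ring.prime p"
    and v: "wt (\<lambda>a b. b \<subseteq> a) (nonid_p_subgroups p G) v"
    and g: "g \<in> carrier G" "g \<noteq> \<one>"
  shows "(\<Sum>H\<in>{H\<in>nonid_p_subgroups p G. g \<in> H}. v H) = (if generate G {g} \<in> nonid_p_subgroups p G then 1 else 0)"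
proof -
  define S where "S = nonid_p_subgroups p G"
  define C where "C = generate G {g}"
  have Csub: "subgroup C G" unfolding C_def by (rule generate_is_subgroup) (use g in simp)
  have gC: "g \<in> C" unfolding C_def by (rule generate.incl) simp
  have eqset: "{H\<in>S. g \<in> H} = {H\<in>S. C \<subseteq> H}"
    using gen_in_S_iff[OF fin p g] unfolding S_def C_def by blast
  show ?thesis
  proof (cases "C \<in> S")
    case True
    have "(\<Sum>H\<in>{H\<in>S. C \<subseteq> H}. v H) = 1" using v True unfolding wt_def S_def by blast
    then show ?thesis using eqset True unfolding S_def C_def by simp
  next
    case False
    have e: "{H\<in>S. C \<subseteq> H} = {}"
    proof (rule ccontr)
      assume "{H\<in>S. C \<subseteq> H} \<noteq> {}"
      then obtain H where H: "H \<in> S" "C \<subseteq> H" by blast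
      have Hs: "subgroup H G" and "\<exists>k. card H = p ^ k" using H unfolding S_def nonid_p_subgroups_def p_subgroup_def by auto
      then obtain k where "card H = p ^ k" by blast
      then obtain j where "card C = p ^ j" using sub_pgroup[OF p Csub Hs H(2)] by blast
      moreover have "C \<noteq> {\<one>}" using gC g(2) by blast
      ultimately have "C \<in> S" unfolding S_def nonid_p_subgroups_def p_subgroup_def using Csub by blast
      then show False using False by simp
    qed
    have e2: "{H\<in>S. g \<in> H} = {}" by (rule trans[OF eqset e])
    have "(\<Sum>H\<in>{H\<in>S. g \<in> H}. v H) = 0" by (simp only: e2 sum.empty)
    then show ?thesis using False unfolding S_def C_def by simp
  qed
qed

lemma (in group) weighted_sum:
  assumes fin: "finite (carrier G)" and p: "Factorial_Ring.prime p"
    and v: "wt (\<lambda>a b. b \<subseteq> a) (nonid_p_subgroups p G) v"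
  shows "(\<Sum>H\<in>nonid_p_subgroups p G. v H * int (card H))
       = poset_euler_char (\<subseteq>) (nonid_p_subgroups p G) + int (card {g\<in>carrier G. generate G {g} \<in> nonid_p_subgroups p G})"
proof -
  define S where "S = nonid_p_subgroups p G"
  have finS: "finite S" unfolding S_def by (rule finite_S[OF fin])
  have Hsub: "H \<subseteq> carrier G" if "H \<in> S" for H using that subgroup.subset unfolding S_def nonid_p_subgroups_def p_subgroup_def by blast
  have "(\<Sum>H\<in>S. v H * int (card H)) = (\<Sum>H\<in>S. \<Sum>g\<in>{g\<in>carrier G. g \<in> H}. v H)"
  proof (rule sum.cong[OF refl])
    fix H assume H: "H \<in> S"
    have "{g\<in>carrier G. g \<in> H} = H" using Hsub[OF H] by blast
    then show "v H * int (card H) = (\<Sum>g\<in>{g\<in>carrier G. g \<in> H}. v H)" by simp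
  qed
  also have "\<dots> = (\<Sum>g\<in>carrier G. \<Sum>H\<in>{H\<in>S. g \<in> H}. v H)"
    by (rule sum.swap_restrict[OF finS fin])
  also have "\<dots> = (\<Sum>H\<in>{H\<in>S. \<one> \<in> H}. v H) + (\<Sum>g\<in>carrier G - {\<one>}. \<Sum>H\<in>{H\<in>S. g \<in> H}. v H)"
    by (rule sum.remove[OF fin one_closed])
  also have "(\<Sum>H\<in>{H\<in>S. \<one> \<in> H}. v H) = poset_euler_char (\<subseteq>) S"
  proof -
    have "{H\<in>S. \<one> \<in> H} = S" unfolding S_def nonid_p_subgroups_def p_subgroup_def using subgroup.one_closed by blast
    then show ?thesis using euler_wt_op[OF finS po_subseteq] v unfolding S_def by simp
  qed
  also have "(\<Sum>g\<in>carrier G - {\<one>}. \<Sum>H\<in>{H\<in>S. g \<in> H}. v H)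
      = (\<Sum>g\<in>carrier G - {\<one>}. if generate G {g} \<in> S then 1 else 0)"
    using count_term[OF fin p v] unfolding S_def by (intro sum.cong refl) blast
  also have "\<dots> = int (card {g\<in>carrier G - {\<one>}. generate G {g} \<in> S})"
    using fin by (simp add: sum.If_cases Int_def)
  also have "{g\<in>carrier G - {\<one>}. generate G {g} \<in> S} = {g\<in>carrier G. generate G {g} \<in> S}"
  proof -
    have "generate G {\<one>} \<notin> S"
    proof -
      have "generate G {\<one>} = {\<one>}" using generate_one by simp
      then show ?thesis unfolding S_def nonid_p_subgroups_def by simp
    qed
    then show ?thesis by blast
  qed
  finally show ?thesis unfolding S_def .
qed


lemma (in group) cyc_count:
  assumes fin: "finite (carrier G)" and p: "Factorial_Ring.prime p"
    and C: "C \<in> nonid_cyclic_p_subgroups p G"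
  shows "real (card {g\<in>carrier G. generate G {g} = C}) = (real p - 1) / real p * real (card C)"
proof -
  obtain g0 where g0: "g0 \<in> carrier G" "C = generate G {g0}" using C unfolding nonid_cyclic_p_subgroups_def by blast
  have CS: "C \<in> nonid_p_subgroups p G" using C unfolding nonid_cyclic_p_subgroups_def by blast
  have Csub: "subgroup C G" "C \<noteq> {\<one>}" "\<exists>k. card C = p ^ k" using CS unfolding nonid_p_subgroups_def p_subgroup_def by auto
  obtain k where k: "card C = p ^ k" using Csub(3) by blast
  have k0: "k > 0"
  proof (rule ccontr)
    assume "\<not> k > 0"
    then have "card C = 1" using k by simp
    then obtain c where c: "C = {c}" by (rule card_1_singletonE)
    have "\<one> \<in> C" by (rule subgroup.one_closed[OF Csub(1)])
    then show False using c Csub(2) by simp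
  qed
  have ordg: "ord g0 = p ^ k" using generate_pow_card[OF g0(1)] g0(2) k by simp
  have "card {g\<in>carrier G. generate G {g} = C} = card {j\<in>{1..ord g0}. coprime j (ord g0)}"
    unfolding g0(2) by (rule gen_count[OF fin g0(1)])
  also have "\<dots> = p^k - p^(k-1)" unfolding ordg by (rule coprime_count_prime_power[OF p k0])
  finally have c1: "card {g\<in>carrier G. generate G {g} = C} = p^k - p^(k-1)" .
  have pk: "p^k = p * p^(k-1)" using k0 by (cases k) simp_all
  have p0: "real p > 0" using p prime_gt_0_nat by simp
  have p1: "p \<ge> 1" using prime_gt_0_nat[OF p] by simp
  have le: "p^(k-1) \<le> p^k" unfolding pk using p1 by simp
  have "real (p^k - p^(k-1)) = real p * real p^(k-1) - real p^(k-1)"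
    using le pk by (simp add: of_nat_diff)
  also have "\<dots> = (real p - 1) / real p * (real p * real p^(k-1))"
    using p0 by (simp add: field_simps)
  also have "real p * real p^(k-1) = real (card C)" using k pk by simp
  finally show ?thesis using c1 by simp
qed

lemma (in group) identity3:
  assumes fin: "finite (carrier G)" and p: "Factorial_Ring.prime p"
  shows "(\<Sum>H\<in>nonid_p_subgroups p G.
            real (card H) - real_of_int (chi_S p (G\<lparr>carrier := normalizer G H\<rparr> Mod H)) * real (card H)
              + real_of_int (subgroup_mu G H))
         = (real p - 1) / real p * (\<Sum>C\<in>nonid_cyclic_p_subgroups p G. real (card C))"
proof -
  define S where "S = nonid_p_subgroups p G"
  define Cyc where "Cyc = nonid_cyclic_p_subgroups p G"
  define A where "A = {g\<in>carrier G. generate G {g} \<in> S}"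
  obtain v where v: "wt (\<lambda>a b. b \<subseteq> a) S v" using upwt_exists[OF fin] unfolding S_def by blast
  have finS: "finite S" unfolding S_def by (rule finite_S[OF fin])
  have CycS: "Cyc \<subseteq> S" unfolding Cyc_def S_def nonid_cyclic_p_subgroups_def by blast
  have finCyc: "finite Cyc" using finite_subset[OF CycS finS] .
  have finA: "finite A" unfolding A_def using fin by simp
  have "(\<Sum>H\<in>S. real (card H) - real_of_int (chi_S p (G\<lparr>carrier := normalizer G H\<rparr> Mod H)) * real (card H)
              + real_of_int (subgroup_mu G H))
      = (\<Sum>H\<in>S. real_of_int (v H * int (card H) + subgroup_mu G H))"
  proof (rule sum.cong[OF refl])
    fix H assume H: "H \<in> S"
    have vH: "v H = 1 - chi_S p (G\<lparr>carrier := normalizer G H\<rparr> Mod H)"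
      using chi_quot[OF fin p H[unfolded S_def]] upwt_val[OF fin v[unfolded S_def] H[unfolded S_def]] by simp
    then show "real (card H) - real_of_int (chi_S p (G\<lparr>carrier := normalizer G H\<rparr> Mod H)) * real (card H)
              + real_of_int (subgroup_mu G H) = real_of_int (v H * int (card H) + subgroup_mu G H)"
      unfolding vH by (simp add: algebra_simps)
  qed
  also have "\<dots> = real_of_int ((\<Sum>H\<in>S. v H * int (card H)) + (\<Sum>H\<in>S. subgroup_mu G H))"
    by (simp add: sum.distrib)
  also have "(\<Sum>H\<in>S. v H * int (card H)) = poset_euler_char (\<subseteq>) S + int (card A)"
    unfolding S_def A_def by (rule weighted_sum[OF fin p v[unfolded S_def]])
  also have "poset_euler_char (\<subseteq>) S = - (\<Sum>H\<in>S. subgroup_mu G H)"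
    unfolding S_def by (rule chi_S_mu[OF fin p])
  finally have L: "(\<Sum>H\<in>S. real (card H) - real_of_int (chi_S p (G\<lparr>carrier := normalizer G H\<rparr> Mod H)) * real (card H)
              + real_of_int (subgroup_mu G H)) = real (card A)" by simp
  have "card A = (\<Sum>x\<in>A. 1)" by simp
  also have "\<dots> = (\<Sum>C\<in>Cyc. \<Sum>x\<in>{x\<in>A. generate G {x} = C}. 1)"
  proof (rule sum.group[symmetric, OF finA finCyc])
    show "(\<lambda>x. generate G {x}) ` A \<subseteq> Cyc"
      unfolding A_def Cyc_def S_def nonid_cyclic_p_subgroups_def by blast
  qed
  also have "\<dots> = (\<Sum>C\<in>Cyc. card {g\<in>carrier G. generate G {g} = C})"
  proof (rule sum.cong[OF refl])
    fix C assume C: "C \<in> Cyc"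
    then have "C \<in> S" using CycS by blast
    then have "{x\<in>A. generate G {x} = C} = {g\<in>carrier G. generate G {g} = C}" unfolding A_def by blast
    then show "(\<Sum>x\<in>{x\<in>A. generate G {x} = C}. 1) = card {g\<in>carrier G. generate G {g} = C}" by simp
  qed
  finally have "real (card A) = (\<Sum>C\<in>Cyc. real (card {g\<in>carrier G. generate G {g} = C}))" by simp
  also have "\<dots> = (\<Sum>C\<in>Cyc. (real p - 1) / real p * real (card C))"
    using cyc_count[OF fin p] unfolding Cyc_def by (intro sum.cong refl) blast
  also have "\<dots> = (real p - 1) / real p * (\<Sum>C\<in>Cyc. real (card C))" by (simp add: sum_distrib_left)
  finally show ?thesis using L unfolding S_def Cyc_def by simp
qed


lemma (in group) centralizer_subgroup:
  assumes x: "x \<in> carrier G"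
  shows "subgroup (centralizer G {x}) G"
proof (rule subgroupI)
  show "centralizer G {x} \<subseteq> carrier G" unfolding centralizer_def by blast
  show "centralizer G {x} \<noteq> {}" using x unfolding centralizer_def by auto
  fix a assume a: "a \<in> centralizer G {x}"
  have aG: "a \<in> carrier G" and ax: "a \<otimes> x = x \<otimes> a" using a unfolding centralizer_def by auto
  have "inv a \<otimes> x = inv a \<otimes> (x \<otimes> a) \<otimes> inv a" using aG x by (simp add: m_assoc)
  also have "\<dots> = inv a \<otimes> (a \<otimes> x) \<otimes> inv a" using ax by simp
  also have "\<dots> = x \<otimes> inv a" using aG x by (simp add: m_assoc[symmetric])
  finally show "inv a \<in> centralizer G {x}" using aG unfolding centralizer_def by simp
  fix b assume b: "b \<in> centralizer G {x}"
  have bG: "b \<in> carrier G" and bx: "b \<otimes> x = x \<otimes> b" using b unfolding centralizer_def by auto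
  have "a \<otimes> b \<otimes> x = a \<otimes> (x \<otimes> b)" using aG bG x bx by (simp add: m_assoc)
  also have "\<dots> = x \<otimes> (a \<otimes> b)" using aG bG x ax by (simp add: m_assoc[symmetric])
  finally show "a \<otimes> b \<in> centralizer G {x}" using aG bG unfolding centralizer_def by simp
qed

lemma (in group) S_of_sub:
  assumes K: "subgroup K G"
  shows "nonid_p_subgroups p (G\<lparr>carrier := K\<rparr>) = {H \<in> nonid_p_subgroups p G. H \<subseteq> K}"
proof -
  have "subgroup H (G\<lparr>carrier := K\<rparr>) \<longleftrightarrow> subgroup H G \<and> H \<subseteq> K" for H
  proof
    assume h: "subgroup H (G\<lparr>carrier := K\<rparr>)"
    have "subgroup H G" by (rule incl_subgroup[OF K h])
    moreover have "H \<subseteq> K" using subgroup.subset[OF h] by simp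
    ultimately show "subgroup H G \<and> H \<subseteq> K" by blast
  next
    assume "subgroup H G \<and> H \<subseteq> K"
    then show "subgroup H (G\<lparr>carrier := K\<rparr>)" using subgroup_incl[OF _ K] by blast
  qed
  then show ?thesis unfolding nonid_p_subgroups_def p_subgroup_def by auto
qed

lemma (in group) mu_sub:
  assumes fin: "finite (carrier G)" and p: "Factorial_Ring.prime p" and K: "subgroup K G"
    and H: "H \<in> nonid_p_subgroups p (G\<lparr>carrier := K\<rparr>)"
  shows "subgroup_mu (G\<lparr>carrier := K\<rparr>) H = subgroup_mu G H"
proof -
  interpret KG: group "G\<lparr>carrier := K\<rparr>" by (rule subgroup_imp_group[OF K])
  have finK: "finite (carrier (G\<lparr>carrier := K\<rparr>))" using fin subgroup.subset[OF K] finite_subset by auto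
  define SK where "SK = nonid_p_subgroups p (G\<lparr>carrier := K\<rparr>)"
  have SKe: "SK = {H \<in> nonid_p_subgroups p G. H \<subseteq> K}" unfolding SK_def by (rule S_of_sub[OF K])
  have w1: "wt (\<subseteq>) SK (\<lambda>H. - subgroup_mu (G\<lparr>carrier := K\<rparr>) H)"
    unfolding SK_def by (rule KG.mu_wt[OF finK p])
  have w2: "wt (\<subseteq>) SK (\<lambda>H. - subgroup_mu G H)"
  proof (rule wt_restrict[OF mu_wt[OF fin p]])
    show "SK \<subseteq> nonid_p_subgroups p G" unfolding SKe by blast
    show "\<And>b c. b \<in> SK \<Longrightarrow> c \<in> nonid_p_subgroups p G \<Longrightarrow> c \<subseteq> b \<Longrightarrow> c \<in> SK"
      unfolding SKe by blast
  qed
  have finSK: "finite SK" unfolding SK_def by (rule KG.finite_S[OF finK])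
  have "- subgroup_mu (G\<lparr>carrier := K\<rparr>) H = - subgroup_mu G H"
    using wt_unique[OF finSK po_subseteq w1 w2] H unfolding SK_def by blast
  then show ?thesis by simp
qed

lemma (in group) centr_norm:
  assumes fin: "finite (carrier G)" and x: "x \<in> carrier G"
    and H: "subgroup H G" and HC: "H \<subseteq> centralizer G {x}"
  shows "centralizer (G\<lparr>carrier := normalizer G H\<rparr>) {x} = normalizer (G\<lparr>carrier := centralizer G {x}\<rparr>) H"
proof -
  define Cx where "Cx = centralizer G {x}"
  have Csub: "subgroup Cx G" unfolding Cx_def by (rule centralizer_subgroup[OF x])
  interpret CG: group "G\<lparr>carrier := Cx\<rparr>" by (rule subgroup_imp_group[OF Csub])
  have Hs: "H \<subseteq> carrier G" using subgroup.subset[OF H] .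
  have finH: "finite H" using fin Hs finite_subset by blast
  have HCx: "subgroup H (G\<lparr>carrier := Cx\<rparr>)" using subgroup_incl[OF H Csub] HC unfolding Cx_def by blast
  have "normalizer (G\<lparr>carrier := Cx\<rparr>) H = {g \<in> Cx. \<forall>h\<in>H. g \<otimes> h \<otimes>\<^bsub>G\<lparr>carrier := Cx\<rparr>\<^esub> inv\<^bsub>G\<lparr>carrier := Cx\<rparr>\<^esub> g \<in> H}"
    using CG.normalizer_iff[OF HCx finH] by simp
  also have "\<dots> = {g \<in> Cx. \<forall>h\<in>H. g \<otimes> h \<otimes> inv g \<in> H}"
  proof (rule Collect_cong)
    fix g show "(g \<in> Cx \<and> (\<forall>h\<in>H. g \<otimes> h \<otimes>\<^bsub>G\<lparr>carrier := Cx\<rparr>\<^esub> inv\<^bsub>G\<lparr>carrier := Cx\<rparr>\<^esub> g \<in> H)) =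
                (g \<in> Cx \<and> (\<forall>h\<in>H. g \<otimes> h \<otimes> inv g \<in> H))"
      using m_inv_consistent[OF Csub] by auto
  qed
  also have "\<dots> = centralizer (G\<lparr>carrier := normalizer G H\<rparr>) {x}"
    unfolding centralizer_def Cx_def normalizer_iff[OF H finH] by auto
  finally show ?thesis unfolding Cx_def by simp
qed

lemma (in group) identity2:
  assumes fin: "finite (carrier G)" and p: "Factorial_Ring.prime p"
  shows "(\<Sum>H\<in>nonid_p_subgroups p G. \<Sum>x\<in>centralizer G H.
            1 - chi_S p (G\<lparr>carrier := centralizer (G\<lparr>carrier := normalizer G H\<rparr>) {x}\<rparr> Mod H)
              + subgroup_mu G H) = 0"
proof -
  define S where "S = nonid_p_subgroups p G"
  define f where "f H x = 1 - chi_S p (G\<lparr>carrier := centralizer (G\<lparr>carrier := normalizer G H\<rparr>) {x}\<rparr> Mod H)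
              + subgroup_mu G H" for H x
  have finS: "finite S" unfolding S_def by (rule finite_S[OF fin])
  have "(\<Sum>H\<in>S. \<Sum>x\<in>centralizer G H. f H x) = (\<Sum>H\<in>S. \<Sum>x\<in>{x\<in>carrier G. x \<in> centralizer G H}. f H x)"
  proof (rule sum.cong[OF refl])
    fix H have "{x\<in>carrier G. x \<in> centralizer G H} = centralizer G H" unfolding centralizer_def by blast
    then show "(\<Sum>x\<in>centralizer G H. f H x) = (\<Sum>x\<in>{x\<in>carrier G. x \<in> centralizer G H}. f H x)" by simp
  qed
  also have "\<dots> = (\<Sum>x\<in>carrier G. \<Sum>H\<in>{H\<in>S. x \<in> centralizer G H}. f H x)"
    by (rule sum.swap_restrict[OF finS fin])
  also have "\<dots> = (\<Sum>x\<in>carrier G. 0)"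
  proof (rule sum.cong[OF refl])
    fix x assume x: "x \<in> carrier G"
    define Cx where "Cx = centralizer G {x}"
    have Csub: "subgroup Cx G" unfolding Cx_def by (rule centralizer_subgroup[OF x])
    interpret CG: group "G\<lparr>carrier := Cx\<rparr>" by (rule subgroup_imp_group[OF Csub])
    have finC: "finite (carrier (G\<lparr>carrier := Cx\<rparr>))" using fin subgroup.subset[OF Csub] finite_subset by auto
    have SC: "nonid_p_subgroups p (G\<lparr>carrier := Cx\<rparr>) = {H\<in>S. H \<subseteq> Cx}"
      unfolding S_def by (rule S_of_sub[OF Csub])
    have seteq: "{H\<in>S. x \<in> centralizer G H} = {H\<in>S. H \<subseteq> Cx}"
    proof -
      have "x \<in> centralizer G H \<longleftrightarrow> H \<subseteq> Cx" if "H \<in> S" for H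
      proof -
        have "H \<subseteq> carrier G" using that subgroup.subset unfolding S_def nonid_p_subgroups_def p_subgroup_def by blast
        then show ?thesis using x unfolding centralizer_def Cx_def by auto
      qed
      then show ?thesis by blast
    qed
    have "(\<Sum>H\<in>{H\<in>S. x \<in> centralizer G H}. f H x)
        = (\<Sum>H\<in>nonid_p_subgroups p (G\<lparr>carrier := Cx\<rparr>).
            1 - chi_S p ((G\<lparr>carrier := Cx\<rparr>)\<lparr>carrier := normalizer (G\<lparr>carrier := Cx\<rparr>) H\<rparr> Mod H)
              + subgroup_mu (G\<lparr>carrier := Cx\<rparr>) H)"
      unfolding seteq SC
    proof (rule sum.cong[OF refl])
      fix H assume H: "H \<in> {H\<in>S. H \<subseteq> Cx}"
      have Hsub: "subgroup H G" using H unfolding S_def nonid_p_subgroups_def p_subgroup_def by auto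
      have HC: "H \<subseteq> centralizer G {x}" using H unfolding Cx_def by blast
      have cn: "centralizer (G\<lparr>carrier := normalizer G H\<rparr>) {x} = normalizer (G\<lparr>carrier := Cx\<rparr>) H"
        unfolding Cx_def by (rule centr_norm[OF fin x Hsub HC])
      have mu: "subgroup_mu (G\<lparr>carrier := Cx\<rparr>) H = subgroup_mu G H"
        using mu_sub[OF fin p Csub] H SC by blast
      show "f H x = 1 - chi_S p ((G\<lparr>carrier := Cx\<rparr>)\<lparr>carrier := normalizer (G\<lparr>carrier := Cx\<rparr>) H\<rparr> Mod H)
              + subgroup_mu (G\<lparr>carrier := Cx\<rparr>) H"
        unfolding f_def cn mu by simp
    qed
    also have "\<dots> = 0" by (rule CG.identity1[OF finC p])
    finally show "(\<Sum>H\<in>{H\<in>S. x \<in> centralizer G H}. f H x) = 0" .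
  qed
  finally show ?thesis unfolding S_def f_def by simp
qed



theorem corollary1p2:
  fixes G :: "('a, 'b) monoid_scheme" and p :: nat
  assumes "group G" and "finite (carrier G)" and "Factorial_Ring.prime p"
  shows "((\<Sum>H\<in>nonid_p_subgroups p G.
            1 - chi_S p (G\<lparr>carrier := normalizer G H\<rparr> Mod H) + subgroup_mu G H) = 0)
    \<and> ((\<Sum>H\<in>nonid_p_subgroups p G. \<Sum>x\<in>centralizer G H.
            1 - chi_S p (G\<lparr>carrier := centralizer (G\<lparr>carrier := normalizer G H\<rparr>) {x}\<rparr> Mod H)
              + subgroup_mu G H) = 0)
    \<and> ((\<Sum>H\<in>nonid_p_subgroups p G.
            real (card H) - real_of_int (chi_S p (G\<lparr>carrier := normalizer G H\<rparr> Mod H)) * real (card H)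
              + real_of_int (subgroup_mu G H))
         = (real p - 1) / real p * (\<Sum>C\<in>nonid_cyclic_p_subgroups p G. real (card C)))"
proof -
  interpret group G by fact
  have 1: "(\<Sum>H\<in>nonid_p_subgroups p G.
            1 - chi_S p (G\<lparr>carrier := normalizer G H\<rparr> Mod H) + subgroup_mu G H) = 0"
    by (rule identity1[OF assms(2,3)])
  have 2: "(\<Sum>H\<in>nonid_p_subgroups p G. \<Sum>x\<in>centralizer G H.
            1 - chi_S p (G\<lparr>carrier := centralizer (G\<lparr>carrier := normalizer G H\<rparr>) {x}\<rparr> Mod H)
              + subgroup_mu G H) = 0"
    by (rule identity2[OF assms(2,3)])
  have 3: "(\<Sum>H\<in>nonid_p_subgroups p G.
            real (card H) - real_of_int (chi_S p (G\<lparr>carrier := normalizer G H\<rparr> Mod H)) * real (card H)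
              + real_of_int (subgroup_mu G H))
         = (real p - 1) / real p * (\<Sum>C\<in>nonid_cyclic_p_subgroups p G. real (card C))"
    by (rule identity3[OF assms(2,3)])
  show ?thesis using 1 2 3 by (intro conjI)
qed

end
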